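(* For every $n$, the congruence $\mathcal{H}(\{3412,2413\})_n$ on $S_n$ equals the meet $\mathcal{H}(\{231\})_n\wedge\mathcal{H}(\{312\})_n$ in the lattice of congruences of $S_n$.
   Context: $S_n$: permutations of $[n]$ in one-line notation with the right weak order (inclusion of sets of inverted value pairs), a lattice. Congruences of a lattice are ordered by refinement, and the meet of two congruences is their intersection as relations. Join-irreducibles of $S_n$ are the permutations with exactly one descent; $\gamma_*$ is the unique element covered by $\gamma$, and a congruence contracts $\gamma$ if $\gamma\equiv\gamma_*$. $u\times v=u_1\cdots u_p(p+v_1)\cdots(p+v_q)$; $\mathrm{st}(a_1..a_k)$ is the $u\in S_k$ with $u_i<u_j\iff a_i<a_j$. A family $\{\Theta_n\}_{n\ge0}$ of lattice congruences on $S_n$ is translational if $u\times v\equiv u'\times v'$ mod $\Theta_{p+q}$ iff $u\equiv u'$ mod $\Theta_p$ and $v\equiv v'$ mod $\Theta_q$; insertional if for every $p$-subset $Q\subseteq[p+q]$, with $\varphi_Q(u,v)$ the unique $x\in S_{p+q}$ with $\{x_1..x_p\}=Q$, $\mathrm{st}(x_1..x_p)=u$, $\mathrm{st}(x_{p+1}..x_{p+q})=v$, we have $u\equiv u',v\equiv v'\Rightarrow\varphi_Q(u,v)\equiv\varphi_Q(u',v')$; an $\mathcal{H}$-family if both. For a set $C$ of join-irreducible permutations, $\{\mathcal{H}(C)_n\}$ is the smallest $\mathcal{H}$-family contracting every element of $C$. *)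

theory Defs
  imports Main
begin

definition Sn :: "nat \<Rightarrow> nat list set" where
  "Sn n = {w. distinct w \<and> set w = {1..n}}"

definition invs :: "nat list \<Rightarrow> (nat \<times> nat) set" where
  "invs w = {(a,b). a < b \<and> (\<exists>i j. i < j \<and> j < length w \<and> w ! i = b \<and> w ! j = a)}"

definition weak_le :: "nat list \<Rightarrow> nat list \<Rightarrow> bool" where
  "weak_le w w' \<longleftrightarrow> invs w \<subseteq> invs w'"

definition weak_lt :: "nat list \<Rightarrow> nat list \<Rightarrow> bool" where
  "weak_lt w w' \<longleftrightarrow> invs w \<subset> invs w'"

definition is_wjoin :: "nat \<Rightarrow> nat list \<Rightarrow> nat list \<Rightarrow> nat list \<Rightarrow> bool" where
  "is_wjoin n x y z \<longleftrightarrow> z \<in> Sn n \<and> weak_le x z \<and> weak_le y z \<and>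
     (\<forall>w\<in>Sn n. weak_le x w \<and> weak_le y w \<longrightarrow> weak_le z w)"

definition is_wmeet :: "nat \<Rightarrow> nat list \<Rightarrow> nat list \<Rightarrow> nat list \<Rightarrow> bool" where
  "is_wmeet n x y z \<longleftrightarrow> z \<in> Sn n \<and> weak_le z x \<and> weak_le z y \<and>
     (\<forall>w\<in>Sn n. weak_le w x \<and> weak_le w y \<longrightarrow> weak_le w z)"

definition wjoin :: "nat \<Rightarrow> nat list \<Rightarrow> nat list \<Rightarrow> nat list" where
  "wjoin n x y = (THE z. is_wjoin n x y z)"

definition wmeet :: "nat \<Rightarrow> nat list \<Rightarrow> nat list \<Rightarrow> nat list" where
  "wmeet n x y = (THE z. is_wmeet n x y z)"

definition lattice_congruence :: "nat \<Rightarrow> (nat list \<times> nat list) set \<Rightarrow> bool" where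
  "lattice_congruence n \<Theta> \<longleftrightarrow> equiv (Sn n) \<Theta> \<and>
     (\<forall>x y z. (x, y) \<in> \<Theta> \<longrightarrow> z \<in> Sn n \<longrightarrow>
        (wjoin n x z, wjoin n y z) \<in> \<Theta> \<and> (wmeet n x z, wmeet n y z) \<in> \<Theta>)"

definition lower_star :: "nat list \<Rightarrow> nat list" where
  "lower_star \<gamma> = (THE w. w \<in> Sn (length \<gamma>) \<and> weak_lt w \<gamma> \<and>
      \<not> (\<exists>z\<in>Sn (length \<gamma>). weak_lt w z \<and> weak_lt z \<gamma>))"

definition cross :: "nat list \<Rightarrow> nat list \<Rightarrow> nat list" where
  "cross u v = u @ map (\<lambda>a. length u + a) v"

text \<open>phi_Q(u,v) in S_N (N = p+q): first p entries are the values in Q, pattern u;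
  the remaining entries are the values of [N]-Q, pattern v.\<close>
definition phi :: "nat \<Rightarrow> nat set \<Rightarrow> nat list \<Rightarrow> nat list \<Rightarrow> nat list" where
  "phi N Q u v =
     (let qs = sorted_list_of_set Q; rs = sorted_list_of_set ({1..N} - Q)
      in map (\<lambda>i. qs ! (i - 1)) u @ map (\<lambda>j. rs ! (j - 1)) v)"

definition translational :: "(nat \<Rightarrow> (nat list \<times> nat list) set) \<Rightarrow> bool" where
  "translational \<Theta> \<longleftrightarrow> (\<forall>p q u u' v v'.
      u \<in> Sn p \<longrightarrow> u' \<in> Sn p \<longrightarrow> v \<in> Sn q \<longrightarrow> v' \<in> Sn q \<longrightarrow>
      ((cross u v, cross u' v') \<in> \<Theta> (p + q) \<longleftrightarrow> (u, u') \<in> \<Theta> p \<and> (v, v') \<in> \<Theta> q))"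

definition insertional :: "(nat \<Rightarrow> (nat list \<times> nat list) set) \<Rightarrow> bool" where
  "insertional \<Theta> \<longleftrightarrow> (\<forall>p q Q u u' v v'.
      Q \<subseteq> {1..p + q} \<longrightarrow> card Q = p \<longrightarrow>
      u \<in> Sn p \<longrightarrow> u' \<in> Sn p \<longrightarrow> v \<in> Sn q \<longrightarrow> v' \<in> Sn q \<longrightarrow>
      (u, u') \<in> \<Theta> p \<longrightarrow> (v, v') \<in> \<Theta> q \<longrightarrow>
      (phi (p + q) Q u v, phi (p + q) Q u' v') \<in> \<Theta> (p + q))"

definition H_family :: "(nat \<Rightarrow> (nat list \<times> nat list) set) \<Rightarrow> bool" where
  "H_family \<Theta> \<longleftrightarrow> (\<forall>n. lattice_congruence n (\<Theta> n)) \<and> translational \<Theta> \<and> insertional \<Theta>"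

definition contracts :: "(nat \<Rightarrow> (nat list \<times> nat list) set) \<Rightarrow> nat list \<Rightarrow> bool" where
  "contracts \<Theta> \<gamma> \<longleftrightarrow> (\<gamma>, lower_star \<gamma>) \<in> \<Theta> (length \<gamma>)"

text \<open>H(C)_n: the smallest H-family contracting all of C, realised as the componentwise
  intersection of all such H-families.\<close>
definition Hcong :: "nat list set \<Rightarrow> nat \<Rightarrow> (nat list \<times> nat list) set" where
  "Hcong C n = \<Inter> {\<Theta> n | \<Theta>. H_family \<Theta> \<and> (\<forall>\<gamma>\<in>C. contracts \<Theta> \<gamma>)}"

end

theory Submission imports Defs begin

fun bef :: "nat list \<Rightarrow> nat \<Rightarrow> nat \<Rightarrow> bool" where
  "bef [] p q = False"
| "bef (x # xs) p q = ((p = x \<and> q \<in> set xs) \<or> bef xs p q)"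

lemma bef_nth: "bef w p q \<longleftrightarrow> (\<exists>i j. i < j \<and> j < length w \<and> w ! i = p \<and> w ! j = q)"
proof (induction w)
  case Nil then show ?case by simp
next
  case (Cons x xs)
  show ?case
  proof
    assume "bef (x # xs) p q"
    then consider "p = x" "q \<in> set xs" | "bef xs p q" by auto
    then show "\<exists>i j. i < j \<and> j < length (x # xs) \<and> (x # xs) ! i = p \<and> (x # xs) ! j = q"
    proof cases
      case 1
      then obtain j where "j < length xs" "xs ! j = q" by (metis in_set_conv_nth)
      then show ?thesis using 1 by (intro exI[of _ 0] exI[of _ "Suc j"]) auto
    next
      case 2
      then obtain i j where "i < j" "j < length xs" "xs ! i = p" "xs ! j = q" using Cons by auto
      then show ?thesis by (intro exI[of _ "Suc i"] exI[of _ "Suc j"]) auto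
    qed
  next
    assume "\<exists>i j. i < j \<and> j < length (x # xs) \<and> (x # xs) ! i = p \<and> (x # xs) ! j = q"
    then obtain i j where ij: "i < j" "j < length (x # xs)" "(x # xs) ! i = p" "(x # xs) ! j = q" by blast
    then obtain j' where j': "j = Suc j'" by (cases j) auto
    show "bef (x # xs) p q"
    proof (cases i)
      case 0 then show ?thesis using ij j' by auto
    next
      case (Suc i')
      then have "bef xs p q" using Cons ij j' by auto
      then show ?thesis by simp
    qed
  qed
qed

lemma invs_bef: "invs w = {(a,b). a < b \<and> bef w b a}"
  unfolding invs_def bef_nth by blast

lemma mem_invs: "(a,b) \<in> invs w \<longleftrightarrow> a < b \<and> bef w b a"
  by (simp add: invs_bef)

lemma bef_set: "bef w p q \<Longrightarrow> p \<in> set w \<and> q \<in> set w"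
  by (induction w) auto

lemma bef_append: "bef (xs @ ys) p q \<longleftrightarrow> bef xs p q \<or> bef ys p q \<or> (p \<in> set xs \<and> q \<in> set ys)"
  by (induction xs) auto

lemma bef_total: "p \<in> set w \<Longrightarrow> q \<in> set w \<Longrightarrow> p \<noteq> q \<Longrightarrow> bef w p q \<or> bef w q p"
  by (induction w) auto

lemma bef_asym: "distinct w \<Longrightarrow> bef w p q \<Longrightarrow> \<not> bef w q p"
  by (induction w) (auto dest: bef_set)

lemma bef_irrefl: "distinct w \<Longrightarrow> \<not> bef w p p"
  using bef_asym by blast

lemma bef_trans: "distinct w \<Longrightarrow> bef w p q \<Longrightarrow> bef w q r \<Longrightarrow> bef w p r"
  by (induction w) (auto dest: bef_set)

lemma bef_rev: "bef (rev w) p q \<longleftrightarrow> bef w q p"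
  by (induction w) (auto simp: bef_append)

lemma bef_map: "bef (map f w) s t \<longleftrightarrow> (\<exists>i j. f i = s \<and> f j = t \<and> bef w i j)"
proof (induction w)
  case Nil then show ?case by simp
next
  case (Cons x xs)
  have "bef (map f (x # xs)) s t \<longleftrightarrow> (s = f x \<and> t \<in> f ` set xs) \<or> bef (map f xs) s t" by simp
  also have "\<dots> \<longleftrightarrow> (\<exists>i j. f i = s \<and> f j = t \<and> bef (x # xs) i j)"
    using Cons.IH by auto
  finally show ?case .
qed

lemma bef_sorted: "sorted_wrt (<) w \<Longrightarrow> bef w p q \<longleftrightarrow> p \<in> set w \<and> q \<in> set w \<and> p < q"
  by (induction w) auto

lemma bef_leftmost: "S \<noteq> {} \<Longrightarrow> S \<subseteq> set w \<Longrightarrow> \<exists>g\<in>S. \<forall>e\<in>S. e \<noteq> g \<longrightarrow> bef w g e"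
proof (induction w arbitrary: S)
  case Nil then show ?case by simp
next
  case (Cons x xs)
  show ?case
  proof (cases "x \<in> S")
    case True 
    have "\<forall>e\<in>S. e \<noteq> x \<longrightarrow> bef (x # xs) x e" using Cons.prems(2) by auto
    then show ?thesis using True by blast
  next
    case False
    then have Sx: "S \<subseteq> set xs" using Cons.prems by auto
    then obtain g where g: "g \<in> S" "\<forall>e\<in>S. e \<noteq> g \<longrightarrow> bef xs g e" using Cons.IH[OF Cons.prems(1) Sx] by blast
    show ?thesis by (rule bexI[OF _ g(1)]) (simp add: g(2))
  qed
qed

lemma bef_rightmost: "S \<noteq> {} \<Longrightarrow> S \<subseteq> set w \<Longrightarrow> \<exists>g\<in>S. \<forall>e\<in>S. e \<noteq> g \<longrightarrow> bef w e g"
  using bef_leftmost[of S "rev w"] by (simp add: bef_rev)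

lemma bef_decomp: "bef w p q \<Longrightarrow> \<exists>T M U. w = T @ p # M @ q # U"
proof (induction w)
  case Nil then show ?case by simp
next
  case (Cons x xs)
  show ?case
  proof (cases "p = x \<and> q \<in> set xs")
    case True
    then obtain M U where "xs = M @ q # U" by (metis split_list)
    then show ?thesis using True by (intro exI[of _ "[]"] exI[of _ M] exI[of _ U]) auto
  next
    case False
    then have "bef xs p q" using Cons.prems by auto
    then obtain T M U where "xs = T @ p # M @ q # U" using Cons.IH by blast
    then show ?thesis by (intro exI[of _ "x # T"] exI[of _ M] exI[of _ U]) auto
  qed
qed


definition Pairs :: "nat \<Rightarrow> (nat \<times> nat) set" where
  "Pairs n = {(a,b). 1 \<le> a \<and> a < b \<and> b \<le> n}"

definition closedI :: "(nat \<times> nat) set \<Rightarrow> bool" where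
  "closedI I \<longleftrightarrow> (\<forall>a b c. (a,b) \<in> I \<longrightarrow> (b,c) \<in> I \<longrightarrow> (a,c) \<in> I)"

definition coclosedI :: "(nat \<times> nat) set \<Rightarrow> bool" where
  "coclosedI I \<longleftrightarrow> (\<forall>a b c. (a,c) \<in> I \<longrightarrow> a < b \<longrightarrow> b < c \<longrightarrow> (a,b) \<in> I \<or> (b,c) \<in> I)"

lemma Sn_distinct: "w \<in> Sn n \<Longrightarrow> distinct w" by (simp add: Sn_def)
lemma Sn_set: "w \<in> Sn n \<Longrightarrow> set w = {1..n}" by (simp add: Sn_def)
lemma Sn_length: "w \<in> Sn n \<Longrightarrow> length w = n"
proof -
  assume "w \<in> Sn n"
  then have "distinct w" "set w = {1..n}" by (auto simp: Sn_def)
  then show "length w = n" using distinct_card[of w] by simp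
qed

lemma invs_Pairs: "w \<in> Sn n \<Longrightarrow> invs w \<subseteq> Pairs n"
proof
  fix x assume w: "w \<in> Sn n" and x: "x \<in> invs w"
  obtain a b where ab: "x = (a,b)" by (cases x)
  then have "a < b" "bef w b a" using x by (auto simp: mem_invs)
  then have "a \<in> set w" "b \<in> set w" using bef_set by blast+
  then show "x \<in> Pairs n" using ab \<open>a < b\<close> Sn_set[OF w] by (simp add: Pairs_def)
qed

lemma invs_closed: "distinct w \<Longrightarrow> closedI (invs w)"
  unfolding closedI_def mem_invs
proof (intro allI impI)
  fix a b c assume d: "distinct w" and "a < b \<and> bef w b a" "b < c \<and> bef w c b"
  then show "a < c \<and> bef w c a" using bef_trans[OF d, of c b a] by simp
qed

lemma invs_coclosed: "w \<in> Sn n \<Longrightarrow> coclosedI (invs w)"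
  unfolding coclosedI_def mem_invs
proof (intro allI impI)
  fix a b c assume ac: "a < c \<and> bef w c a" and "a < b" "b < c" and w: "w \<in> Sn n"
  have d: "distinct w" using w by (rule Sn_distinct)
  have "a \<in> set w" "c \<in> set w" using ac bef_set by blast+
  then have "b \<in> set w" using \<open>a<b\<close> \<open>b<c\<close> Sn_set[OF w] by auto
  show "a < b \<and> bef w b a \<or> b < c \<and> bef w c b"
  proof (rule ccontr)
    assume "\<not> (a < b \<and> bef w b a \<or> b < c \<and> bef w c b)"
    then have "\<not> bef w b a" "\<not> bef w c b" using \<open>a<b\<close> \<open>b<c\<close> by auto
    then have "bef w a b" "bef w b c" using bef_total \<open>a \<in> set w\<close> \<open>b \<in> set w\<close> \<open>c \<in> set w\<close> \<open>a<b\<close> \<open>b<c\<close>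
      by (metis less_irrefl)+
    then have "bef w a c" using bef_trans[OF d] by blast
    then show False using ac bef_asym[OF d] by blast
  qed
qed

lemma bef_eq_list: "distinct w \<Longrightarrow> distinct w' \<Longrightarrow> set w = set w' \<Longrightarrow> (\<And>p q. bef w p q \<longleftrightarrow> bef w' p q) \<Longrightarrow> w = w'"
proof (induction w arbitrary: w')
  case Nil then show ?case by simp
next
  case (Cons x xs)
  then obtain y ys where w': "w' = y # ys" by (cases w') auto
  have "x = y"
  proof (rule ccontr)
    assume "x \<noteq> y"
    then have "y \<in> set xs" using Cons.prems w' by auto
    then have "bef (x # xs) x y" by simp
    then have "bef w' x y" using Cons.prems by blast
    moreover have "x \<in> set ys" using \<open>x \<noteq> y\<close> Cons.prems w' by (metis list.set_intros(1) set_ConsD)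
    then have "bef w' y x" using w' by simp
    ultimately show False using bef_asym Cons.prems by blast
  qed
  have "set xs = set ys"
  proof -
    have "insert x (set xs) = insert x (set ys)" "x \<notin> set xs" "x \<notin> set ys"
      using Cons.prems w' \<open>x = y\<close> by auto
    then show ?thesis by (metis Diff_insert_absorb)
  qed
  moreover have "bef xs p q \<longleftrightarrow> bef ys p q" for p q
  proof -
    have "bef (x#xs) p q \<longleftrightarrow> bef (y#ys) p q" using Cons.prems w' by blast
    moreover have "x \<notin> set xs" "x \<notin> set ys" using Cons.prems w' \<open>x = y\<close> by auto
    ultimately show ?thesis using \<open>x = y\<close> bef_set[of xs p q] bef_set[of ys p q] by auto
  qed
  ultimately have "xs = ys" using Cons.IH Cons.prems w' by auto
  then show ?case using w' \<open>x = y\<close> by simp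
qed

lemma invs_inj:
  assumes w: "w \<in> Sn n" and w': "w' \<in> Sn n" and eq: "invs w = invs w'"
  shows "w = w'"
proof -
  have s: "set w = set w'" using w w' by (auto simp: Sn_def)
  have dw: "distinct w" and dw': "distinct w'" using w w' by (auto simp: Sn_def)
  have "bef w p q \<longleftrightarrow> bef w' p q" for p q
  proof (cases "p < q")
    case True
    have "bef w p q \<longleftrightarrow> p \<in> set w \<and> q \<in> set w \<and> \<not> bef w q p"
      using bef_total[of p w q] bef_asym[OF dw] True bef_set by fastforce
    moreover have "bef w' p q \<longleftrightarrow> p \<in> set w' \<and> q \<in> set w' \<and> \<not> bef w' q p"
      using bef_total[of p w' q] bef_asym[OF dw'] True bef_set by fastforce
    moreover have "bef w q p \<longleftrightarrow> bef w' q p" using eq True by (metis mem_invs)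
    ultimately show ?thesis using s by simp
  next
    case False
    show ?thesis
    proof (cases "p = q")
      case True then show ?thesis using bef_irrefl dw dw' by metis
    next
      case False
      then have "q < p" using \<open>\<not> p < q\<close> by simp
      then show ?thesis using eq by (metis mem_invs)
    qed
  qed
  then show ?thesis using bef_eq_list[OF dw dw' s] by blast
qed


section \<open>Constructing permutations from inversion sets\<close>

lemma strict_min_exists:
  assumes trO: "\<forall>p\<in>S. \<forall>q\<in>S. \<forall>r\<in>S. R p q \<longrightarrow> R q r \<longrightarrow> R p r"
    and totO: "\<forall>p\<in>S. \<forall>q\<in>S. p \<noteq> q \<longrightarrow> R p q \<or> R q p"
  shows "finite T \<Longrightarrow> T \<noteq> {} \<Longrightarrow> T \<subseteq> S \<Longrightarrow> \<exists>g\<in>T. \<forall>e\<in>T. e \<noteq> g \<longrightarrow> R g e"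
  proof (induction T rule: finite_ne_induct)
    case (singleton x) then show ?case by simp
  next
    case (insert x F)
    then have FS: "F \<subseteq> S" and xS: "x \<in> S" by auto
    obtain g where g: "g \<in> F" "\<forall>e\<in>F. e \<noteq> g \<longrightarrow> R g e"
      using insert.IH[OF FS] by blast
    have gS: "g \<in> S" using g(1) FS by blast
    show ?case
    proof (cases "R x g")
      case True
      have "\<forall>e\<in>insert x F. e \<noteq> x \<longrightarrow> R x e"
      proof (intro ballI impI)
        fix e assume e: "e \<in> insert x F" "e \<noteq> x"
        then have "e \<in> F" by simp
        then have eS: "e \<in> S" using FS by blast
        show "R x e"
        proof (cases "e = g")
          case True then show ?thesis using \<open>R x g\<close> by simp
        next
          case False
          then have "R g e" using g \<open>e \<in> F\<close> by blast
          then show ?thesis using trO xS gS eS \<open>R x g\<close> by blast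
        qed
      qed
      then show ?thesis by blast
    next
      case False
      have "x \<noteq> g" using insert.hyps g(1) by blast
      then have "R g x" using totO xS gS False by blast
      then have "\<forall>e\<in>insert x F. e \<noteq> g \<longrightarrow> R g e" using g by blast
      then show ?thesis using g(1) by blast
    qed
  qed

lemma list_of_order:
  assumes "finite S"
    and irr: "\<And>p. p \<in> S \<Longrightarrow> \<not> R p p"
    and tr: "\<And>p q r. p \<in> S \<Longrightarrow> q \<in> S \<Longrightarrow> r \<in> S \<Longrightarrow> R p q \<Longrightarrow> R q r \<Longrightarrow> R p r"
    and tot: "\<And>p q. p \<in> S \<Longrightarrow> q \<in> S \<Longrightarrow> p \<noteq> q \<Longrightarrow> R p q \<or> R q p"
  shows "\<exists>w. distinct w \<and> set w = S \<and> (\<forall>p\<in>S. \<forall>q\<in>S. bef w p q \<longleftrightarrow> R p q)"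
proof -
  have trO: "\<forall>p\<in>S. \<forall>q\<in>S. \<forall>r\<in>S. R p q \<longrightarrow> R q r \<longrightarrow> R p r" using tr by blast
  have totO: "\<forall>p\<in>S. \<forall>q\<in>S. p \<noteq> q \<longrightarrow> R p q \<or> R q p" using tot by blast
  have main: "\<And>T. k = card T \<Longrightarrow> T \<subseteq> S \<Longrightarrow> \<exists>w. distinct w \<and> set w = T \<and> (\<forall>p\<in>T. \<forall>q\<in>T. bef w p q \<longleftrightarrow> R p q)" for k
  proof (induction k)
    case 0
    fix T assume "0 = card T" "T \<subseteq> S"
    then have "T = {}" using \<open>finite S\<close> finite_subset by fastforce
    then show "\<exists>w. distinct w \<and> set w = T \<and> (\<forall>p\<in>T. \<forall>q\<in>T. bef w p q \<longleftrightarrow> R p q)" by (intro exI[of _ "[]"]) simp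
  next
    case (Suc k)
    fix T assume cT: "Suc k = card T" and TS: "T \<subseteq> S"
    have fT: "finite T" using TS \<open>finite S\<close> finite_subset by blast
    then have "T \<noteq> {}" using cT by auto
    obtain g where g: "g \<in> T" "\<forall>e\<in>T. e \<noteq> g \<longrightarrow> R g e"
      using strict_min_exists[OF trO totO fT \<open>T \<noteq> {}\<close> TS] by blast
    let ?T = "T - {g}"
    have "k = card ?T" using cT g(1) fT by simp
    moreover have "?T \<subseteq> S" using TS by blast
    ultimately obtain w where w: "distinct w" "set w = ?T" "\<forall>p\<in>?T. \<forall>q\<in>?T. bef w p q \<longleftrightarrow> R p q"
      using Suc.IH by blast
    have gw: "g \<notin> set w" using w(2) by simp
    have "\<forall>p\<in>T. \<forall>q\<in>T. bef (g # w) p q \<longleftrightarrow> R p q"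
    proof (intro ballI)
      fix p q assume p: "p \<in> T" and q: "q \<in> T"
      show "bef (g # w) p q \<longleftrightarrow> R p q"
      proof (cases "p = g")
        case True
        have "\<not> bef w g q" using gw bef_set by blast
        moreover have "R g q \<longleftrightarrow> q \<noteq> g" using g q irr[of g] TS by blast
        ultimately show ?thesis using True w(2) q by auto
      next
        case False
        show ?thesis
        proof (cases "q = g")
          case True
          have "\<not> bef w p g" using gw bef_set by blast
          moreover have "\<not> R p g"
          proof
            assume "R p g"
            moreover have "R g p" using g p False by blast
            ultimately show False using tr[of p g p] irr[of p] p g(1) TS by blast
          qed
          ultimately show ?thesis using True False by simp
        next
          case False
          then show ?thesis using \<open>p \<noteq> g\<close> w(3) p q by simp
        qed
      qed
    qed
    then show "\<exists>w. distinct w \<and> set w = T \<and> (\<forall>p\<in>T. \<forall>q\<in>T. bef w p q \<longleftrightarrow> R p q)"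
      using w g(1) gw by (intro exI[of _ "g # w"]) auto
  qed
  show ?thesis using main[OF refl, of S] by blast
qed

lemma closedI_trans: "closedI I \<longleftrightarrow> trans I"
  unfolding closedI_def trans_def by blast

lemma perm_of_invs:
  assumes sub: "I \<subseteq> Pairs n" and cl: "closedI I" and co: "coclosedI I"
  shows "\<exists>w\<in>Sn n. invs w = I"
proof -
  define R where "R p q \<longleftrightarrow> (p < q \<and> (p,q) \<notin> I) \<or> (q < p \<and> (q,p) \<in> I)" for p q
  have cl': "\<And>a b c. (a,b)\<in>I \<Longrightarrow> (b,c)\<in>I \<Longrightarrow> (a,c)\<in>I" using cl unfolding closedI_def by blast
  have co': "\<And>a b c. a<b \<Longrightarrow> b<c \<Longrightarrow> (a,c)\<in>I \<Longrightarrow> (a,b)\<in>I \<or> (b,c)\<in>I" using co unfolding coclosedI_def by blast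
  have tr: "R p r" if "R p q" "R q r" for p q r
    using that unfolding R_def
  proof (elim disjE conjE)
    assume "p < q" "(p, q) \<notin> I" "q < r" "(q, r) \<notin> I"
    then show "p < r \<and> (p, r) \<notin> I \<or> r < p \<and> (r, p) \<in> I" using co'[of p q r] by auto
  next
    assume a: "p < q" "(p, q) \<notin> I" "r < q" "(r, q) \<in> I"
    consider "p < r" | "p = r" | "r < p" by linarith
    then show "p < r \<and> (p, r) \<notin> I \<or> r < p \<and> (r, p) \<in> I"
    proof cases
      case 1 then show ?thesis using a cl'[of p r q] by auto
    next
      case 2 then show ?thesis using a by auto
    next
      case 3 then show ?thesis using a co'[of r p q] by auto
    qed
  next
    assume a: "q < p" "(q, p) \<in> I" "q < r" "(q, r) \<notin> I"
    consider "p < r" | "p = r" | "r < p" by linarith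
    then show "p < r \<and> (p, r) \<notin> I \<or> r < p \<and> (r, p) \<in> I"
    proof cases
      case 1 then show ?thesis using a cl'[of q p r] by auto
    next
      case 2 then show ?thesis using a by auto
    next
      case 3 then show ?thesis using a co'[of q r p] by auto
    qed
  next
    assume a: "q < p" "(q, p) \<in> I" "r < q" "(r, q) \<in> I"
    then show "p < r \<and> (p, r) \<notin> I \<or> r < p \<and> (r, p) \<in> I" using cl'[of r q p] by auto
  qed
  have irr: "\<not> R p p" for p unfolding R_def by simp
  have tot: "R p q \<or> R q p" if "p \<noteq> q" for p q
    using that unfolding R_def by auto
  obtain w where w: "distinct w" "set w = {1..n}" "\<forall>p\<in>{1..n}. \<forall>q\<in>{1..n}. bef w p q \<longleftrightarrow> R p q"
    using list_of_order[of "{1..n}" R] tr irr tot by blast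
  have "w \<in> Sn n" using w by (simp add: Sn_def)
  moreover have "invs w = I"
  proof (intro set_eqI)
    fix x :: "nat \<times> nat"
    obtain a b where x: "x = (a,b)" by (cases x)
    show "x \<in> invs w \<longleftrightarrow> x \<in> I"
    proof
      assume "x \<in> invs w"
      then have "a < b" "bef w b a" using x by (auto simp: mem_invs)
      then have "a \<in> {1..n}" "b \<in> {1..n}" using bef_set w(2) by blast+
      then show "x \<in> I" using w(3) \<open>bef w b a\<close> \<open>a < b\<close> x unfolding R_def by auto
    next
      assume "x \<in> I"
      then have "(a,b) \<in> Pairs n" using sub x by blast
      then have ab: "a < b" "a \<in> {1..n}" "b \<in> {1..n}" unfolding Pairs_def by auto
      then have "bef w b a" using w(3) \<open>x \<in> I\<close> x unfolding R_def by auto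
      then show "x \<in> invs w" using x ab by (simp add: mem_invs)
    qed
  qed
  ultimately show ?thesis by blast
qed

definition incr :: "(nat \<times> nat) set \<Rightarrow> bool" where
  "incr R \<longleftrightarrow> (\<forall>a b. (a,b) \<in> R \<longrightarrow> a < b)"

lemma incr_trancl: assumes "incr R" shows "(a,b) \<in> R\<^sup>+ \<Longrightarrow> a < b"
proof (induction rule: trancl_induct)
  case (base y) then show ?case using assms unfolding incr_def by blast
next
  case (step y z) then show ?case using assms unfolding incr_def by (meson order.strict_trans)
qed

lemma incr_rtrancl: assumes "incr R" shows "(a,b) \<in> R\<^sup>* \<Longrightarrow> a \<le> b"
proof (induction rule: rtrancl_induct)
  case base then show ?case by simp
next
  case (step y z)
  then have "y < z" using assms unfolding incr_def by blast
  then show ?case using step.IH by simp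
qed

lemma Pairs_incr: "R \<subseteq> Pairs n \<Longrightarrow> incr R"
  unfolding incr_def Pairs_def by blast

lemma trans_Pairs: "trans (Pairs n)"
  unfolding trans_def Pairs_def by auto

lemma trancl_sub_trans: "R \<subseteq> T \<Longrightarrow> trans T \<Longrightarrow> R\<^sup>+ \<subseteq> T"
  by (metis trancl_id trancl_mono subsetI)

lemma coclosed_Un: "coclosedI I \<Longrightarrow> coclosedI K \<Longrightarrow> coclosedI (I \<union> K)"
  unfolding coclosedI_def by blast

lemma coclosed_trancl:
  assumes co: "coclosedI R" and inc: "incr R"
  shows "coclosedI (R\<^sup>+)"
proof -
  have "\<forall>b. a < b \<longrightarrow> b < c \<longrightarrow> (a,b) \<in> R\<^sup>+ \<or> (b,c) \<in> R\<^sup>+" if "(a,c) \<in> R\<^sup>+" for a c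
    using that
  proof (induction rule: trancl_induct)
    case (base y)
    then show ?case using co unfolding coclosedI_def by blast
  next
    case (step d c)
    have ad: "a < d" using incr_trancl[OF inc step.hyps(1)] .
    show ?case
    proof (intro allI impI)
      fix b assume b: "a < b" "b < c"
      consider "b < d" | "b = d" | "d < b" by linarith
      then show "(a,b) \<in> R\<^sup>+ \<or> (b,c) \<in> R\<^sup>+"
      proof cases
        case 1
        then have "(a,b) \<in> R\<^sup>+ \<or> (b,d) \<in> R\<^sup>+" using step.IH b by blast
        then show ?thesis using step.hyps(2) by (meson trancl.trancl_into_trancl)
      next
        case 2 then show ?thesis using step.hyps(1) by simp
      next
        case 3
        then have "(d,b) \<in> R \<or> (b,c) \<in> R" using co step.hyps(2) b unfolding coclosedI_def by blast
        then show ?thesis using step.hyps(1) by (meson r_into_trancl trancl.trancl_into_trancl)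
      qed
    qed
  qed
  then show ?thesis unfolding coclosedI_def by blast
qed

section \<open>Joins and meets in the weak order\<close>

lemma is_wjoin_unique: "is_wjoin n x z w \<Longrightarrow> is_wjoin n x z w' \<Longrightarrow> w = w'"
  unfolding is_wjoin_def weak_le_def by (meson invs_inj subset_antisym)

lemma is_wmeet_unique: "is_wmeet n x z w \<Longrightarrow> is_wmeet n x z w' \<Longrightarrow> w = w'"
  unfolding is_wmeet_def weak_le_def by (meson invs_inj subset_antisym)

lemma wjoin_eq: "is_wjoin n x z w \<Longrightarrow> wjoin n x z = w"
  unfolding wjoin_def using is_wjoin_unique by blast

lemma wmeet_eq: "is_wmeet n x z w \<Longrightarrow> wmeet n x z = w"
  unfolding wmeet_def using is_wmeet_unique by blast

lemma join_exists:
  assumes x: "x \<in> Sn n" and z: "z \<in> Sn n"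
  shows "wjoin n x z \<in> Sn n \<and> invs (wjoin n x z) = (invs x \<union> invs z)\<^sup>+ \<and> is_wjoin n x z (wjoin n x z)"
proof -
  let ?R = "invs x \<union> invs z"
  have sub: "?R \<subseteq> Pairs n" using invs_Pairs x z by blast
  have "?R\<^sup>+ \<subseteq> Pairs n" using trancl_sub_trans[OF sub trans_Pairs] .
  moreover have "closedI (?R\<^sup>+)" unfolding closedI_trans by (rule trans_trancl)
  moreover have "coclosedI (?R\<^sup>+)"
    using coclosed_trancl coclosed_Un invs_coclosed x z Pairs_incr sub by blast
  ultimately obtain w where w: "w \<in> Sn n" "invs w = ?R\<^sup>+" using perm_of_invs by blast
  have "is_wjoin n x z w"
    unfolding is_wjoin_def weak_le_def
  proof (intro conjI ballI impI)
    show "w \<in> Sn n" by fact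
    show "invs x \<subseteq> invs w" "invs z \<subseteq> invs w" using w(2) by auto
    fix u assume "u \<in> Sn n" "invs x \<subseteq> invs u \<and> invs z \<subseteq> invs u"
    moreover have "trans (invs u)" using invs_closed[OF Sn_distinct[OF \<open>u \<in> Sn n\<close>]] closedI_trans by blast
    ultimately show "invs w \<subseteq> invs u" using w(2) trancl_sub_trans[of ?R "invs u"] by blast
  qed
  then show ?thesis using wjoin_eq w by auto
qed

lemma rev_Sn: "x \<in> Sn n \<Longrightarrow> rev x \<in> Sn n"
  by (simp add: Sn_def)

lemma invs_rev: assumes x: "x \<in> Sn n" shows "invs (rev x) = Pairs n - invs x"
proof (intro set_eqI)
  fix y :: "nat \<times> nat"
  obtain a b where y: "y = (a,b)" by (cases y)
  have d: "distinct x" using Sn_distinct[OF x] .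
  show "y \<in> invs (rev x) \<longleftrightarrow> y \<in> Pairs n - invs x"
  proof
    assume "y \<in> invs (rev x)"
    then have ab: "a < b" "bef x a b" using y by (auto simp: mem_invs bef_rev)
    then have "a \<in> set x" "b \<in> set x" using bef_set by blast+
    moreover have "\<not> bef x b a" using bef_asym[OF d ab(2)] .
    ultimately show "y \<in> Pairs n - invs x" using y ab Sn_set[OF x] by (auto simp: Pairs_def mem_invs)
  next
    assume "y \<in> Pairs n - invs x"
    then have ab: "a < b" "1 \<le> a" "b \<le> n" "\<not> bef x b a" using y by (auto simp: Pairs_def mem_invs)
    then have "a \<in> set x" "b \<in> set x" using Sn_set[OF x] by auto
    then have "bef x a b" using bef_total ab by (metis less_irrefl)
    then show "y \<in> invs (rev x)" using y ab by (simp add: mem_invs bef_rev)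
  qed
qed

lemma meet_exists:
  assumes x: "x \<in> Sn n" and z: "z \<in> Sn n"
  shows "wmeet n x z \<in> Sn n \<and> invs (wmeet n x z) = Pairs n - ((Pairs n - invs x) \<union> (Pairs n - invs z))\<^sup>+"
proof -
  let ?J = "wjoin n (rev x) (rev z)"
  have J: "?J \<in> Sn n" "invs ?J = (invs (rev x) \<union> invs (rev z))\<^sup>+"
    using join_exists[OF rev_Sn[OF x] rev_Sn[OF z]] by auto
  have Jl: "is_wjoin n (rev x) (rev z) ?J"
    using join_exists[OF rev_Sn[OF x] rev_Sn[OF z]] by auto
  let ?m = "rev ?J"
  have m: "?m \<in> Sn n" using rev_Sn[OF J(1)] .
  have im: "invs ?m = Pairs n - invs ?J" using invs_rev[OF J(1)] .
  have "is_wmeet n x z ?m"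
    unfolding is_wmeet_def weak_le_def
  proof (intro conjI ballI impI)
    show "?m \<in> Sn n" by fact
    have "invs (rev x) \<subseteq> invs ?J" "invs (rev z) \<subseteq> invs ?J" using Jl unfolding is_wjoin_def weak_le_def by auto
    then show "invs ?m \<subseteq> invs x" "invs ?m \<subseteq> invs z"
      using im invs_rev[OF x] invs_rev[OF z] invs_Pairs[OF x] invs_Pairs[OF z] by blast+
    fix u assume u: "u \<in> Sn n" "invs u \<subseteq> invs x \<and> invs u \<subseteq> invs z"
    have "invs (rev x) \<subseteq> invs (rev u)" "invs (rev z) \<subseteq> invs (rev u)"
      using u invs_rev[OF x] invs_rev[OF z] invs_rev[OF u(1)] by blast+
    then have "invs ?J \<subseteq> invs (rev u)" using Jl rev_Sn[OF u(1)] unfolding is_wjoin_def weak_le_def by blast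
    then show "invs u \<subseteq> invs ?m" using im invs_rev[OF u(1)] invs_Pairs[OF u(1)] by blast
  qed
  then have "wmeet n x z = ?m" by (rule wmeet_eq)
  then show ?thesis using m im J(2) invs_rev[OF x] invs_rev[OF z] by simp
qed


section \<open>The sylvester invariants\<close>

definition D :: "(nat \<times> nat) set \<Rightarrow> (nat \<times> nat) set" where
  "D I = {(a,c). a < c \<and> (\<forall>b. a \<le> b \<and> b < c \<longrightarrow> (b,c) \<in> I)}"

definition D' :: "(nat \<times> nat) set \<Rightarrow> (nat \<times> nat) set" where
  "D' I = {(a,c). a < c \<and> (\<forall>b. a < b \<and> b \<le> c \<longrightarrow> (a,b) \<in> I)}"

lemma D_mono: "I \<subseteq> J \<Longrightarrow> D I \<subseteq> D J"
  unfolding D_def by blast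

lemma D'_mono: "I \<subseteq> J \<Longrightarrow> D' I \<subseteq> D' J"
  unfolding D'_def by blast

lemma D_sub: "D I \<subseteq> I"
  unfolding D_def by auto

lemma D'_sub: "D' I \<subseteq> I"
  unfolding D'_def by auto

lemma D_join_aux:
  assumes x: "x \<in> Sn n" and K: "K \<subseteq> Pairs n"
  shows "c - b = k \<Longrightarrow> b < c \<Longrightarrow> (\<forall>b'. b \<le> b' \<and> b' < c \<longrightarrow> (b',c) \<in> (invs x \<union> K)\<^sup>+)
     \<Longrightarrow> (b,c) \<in> (D (invs x) \<union> K)\<^sup>+"
proof (induction k arbitrary: b rule: less_induct)
  case (less k)
  let ?R = "invs x \<union> K" and ?R' = "D (invs x) \<union> K"
  have Rsub: "?R \<subseteq> Pairs n" using invs_Pairs[OF x] K by blast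
  have incR: "incr ?R" using Pairs_incr[OF Rsub] .
  have "?R\<^sup>+ \<subseteq> Pairs n" using trancl_sub_trans[OF Rsub trans_Pairs] .
  then have bc: "(b,c) \<in> Pairs n" using less.prems by blast
  then have Ssub: "{b..c} \<subseteq> set x" using Sn_set[OF x] unfolding Pairs_def by auto
  have d: "distinct x" using Sn_distinct[OF x] .
  obtain g where g: "g \<in> {b..c}" "\<forall>e\<in>{b..c}. e \<noteq> g \<longrightarrow> bef x g e"
    using bef_leftmost[of "{b..c}" x] Ssub less.prems(2) by fastforce
  have IH: "(e,c) \<in> ?R'\<^sup>+" if "b < e" "e < c" for e
  proof -
    have "c - e < k" using that less.prems(1) by simp
    moreover have "\<forall>b'. e \<le> b' \<and> b' < c \<longrightarrow> (b',c) \<in> ?R\<^sup>+" using less.prems(3) that by auto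
    ultimately show ?thesis using less.IH[of "c - e" e] that by blast
  qed
  show ?case
  proof (cases "g = b")
    case True
    have "(b,c) \<in> ?R\<^sup>+" using less.prems(2,3) by blast
    then obtain e where e: "(b,e) \<in> ?R" "(e,c) \<in> ?R\<^sup>*" by (meson tranclD)
    have "b < e" using incR e(1) unfolding incr_def by blast
    have "e \<le> c" using incr_rtrancl[OF incR e(2)] .
    have "(b,e) \<notin> invs x"
    proof
      assume "(b,e) \<in> invs x"
      then have "bef x e b" by (simp add: mem_invs)
      moreover have "bef x b e" using g True \<open>b < e\<close> \<open>e \<le> c\<close> by auto
      ultimately show False using bef_asym[OF d] by blast
    qed
    then have "(b,e) \<in> ?R'" using e(1) by blast
    show ?thesis
    proof (cases "e = c")
      case True then show ?thesis using \<open>(b,e) \<in> ?R'\<close> by blast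
    next
      case False
      then have "(e,c) \<in> ?R'\<^sup>+" using IH \<open>b < e\<close> \<open>e \<le> c\<close> by simp
      then show ?thesis using \<open>(b,e) \<in> ?R'\<close> by (meson trancl_into_trancl2)
    qed
  next
    case False
    then have bg: "b < g" "g \<le> c" using g(1) by auto
    have "(b,g) \<in> D (invs x)"
      unfolding D_def
    proof (clarify, intro conjI allI impI)
      show "b < g" by fact
      fix b' assume "b \<le> b' \<and> b' < g"
      then have "bef x g b'" using g bg by auto
      then show "(b',g) \<in> invs x" using \<open>b \<le> b' \<and> b' < g\<close> by (simp add: mem_invs)
    qed
    then have "(b,g) \<in> ?R'" by blast
    show ?thesis
    proof (cases "g = c")
      case True then show ?thesis using \<open>(b,g) \<in> ?R'\<close> by blast
    next
      case False
      then have "(g,c) \<in> ?R'\<^sup>+" using IH bg by simp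
      then show ?thesis using \<open>(b,g) \<in> ?R'\<close> by (meson trancl_into_trancl2)
    qed
  qed
qed

lemma D_join:
  assumes x: "x \<in> Sn n" and K: "K \<subseteq> Pairs n"
  shows "D ((invs x \<union> K)\<^sup>+) = D ((D (invs x) \<union> K)\<^sup>+)"
proof
  show "D ((D (invs x) \<union> K)\<^sup>+) \<subseteq> D ((invs x \<union> K)\<^sup>+)"
    by (intro D_mono trancl_mono_subset) (use D_sub in blast)
  show "D ((invs x \<union> K)\<^sup>+) \<subseteq> D ((D (invs x) \<union> K)\<^sup>+)"
  proof
    fix p assume p: "p \<in> D ((invs x \<union> K)\<^sup>+)"
    obtain a c where pac: "p = (a,c)" by (cases p)
    have ac: "a < c" "\<forall>b. a \<le> b \<and> b < c \<longrightarrow> (b,c) \<in> (invs x \<union> K)\<^sup>+" using p pac unfolding D_def by auto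
    have "(b,c) \<in> (D (invs x) \<union> K)\<^sup>+" if "a \<le> b" "b < c" for b
      using D_join_aux[OF x K refl, of b c] ac that by auto
    then show "p \<in> D ((D (invs x) \<union> K)\<^sup>+)" using pac ac(1) unfolding D_def by auto
  qed
qed

lemma D'_join_aux:
  assumes x: "x \<in> Sn n" and K: "K \<subseteq> Pairs n"
  shows "c - a = k \<Longrightarrow> a < c \<Longrightarrow> (\<forall>c'. a < c' \<and> c' \<le> c \<longrightarrow> (a,c') \<in> (invs x \<union> K)\<^sup>+)
     \<Longrightarrow> (a,c) \<in> (D' (invs x) \<union> K)\<^sup>+"
proof (induction k arbitrary: c rule: less_induct)
  case (less k)
  let ?R = "invs x \<union> K" and ?R' = "D' (invs x) \<union> K"
  have Rsub: "?R \<subseteq> Pairs n" using invs_Pairs[OF x] K by blast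
  have incR: "incr ?R" using Pairs_incr[OF Rsub] .
  have "?R\<^sup>+ \<subseteq> Pairs n" using trancl_sub_trans[OF Rsub trans_Pairs] .
  then have ac: "(a,c) \<in> Pairs n" using less.prems by blast
  then have Ssub: "{a..c} \<subseteq> set x" using Sn_set[OF x] unfolding Pairs_def by auto
  have d: "distinct x" using Sn_distinct[OF x] .
  obtain g where g: "g \<in> {a..c}" "\<forall>e\<in>{a..c}. e \<noteq> g \<longrightarrow> bef x e g"
    using bef_rightmost[of "{a..c}" x] Ssub less.prems(2) by fastforce
  have IH: "(a,e) \<in> ?R'\<^sup>+" if "a < e" "e < c" for e
  proof -
    have "e - a < k" using that less.prems(1) by simp
    moreover have "\<forall>c'. a < c' \<and> c' \<le> e \<longrightarrow> (a,c') \<in> ?R\<^sup>+" using less.prems(3) that by auto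
    ultimately show ?thesis using less.IH[of "e - a" e] that by blast
  qed
  show ?case
  proof (cases "g = c")
    case True
    have "(a,c) \<in> ?R\<^sup>+" using less.prems(2,3) by blast
    then obtain e where e: "(a,e) \<in> ?R\<^sup>*" "(e,c) \<in> ?R" by (meson tranclD2)
    have "e < c" using incR e(2) unfolding incr_def by blast
    have "a \<le> e" using incr_rtrancl[OF incR e(1)] .
    have "(e,c) \<notin> invs x"
    proof
      assume "(e,c) \<in> invs x"
      then have "bef x c e" by (simp add: mem_invs)
      moreover have "bef x e c" using g True \<open>e < c\<close> \<open>a \<le> e\<close> by auto
      ultimately show False using bef_asym[OF d] by blast
    qed
    then have "(e,c) \<in> ?R'" using e(2) by blast
    show ?thesis
    proof (cases "e = a")
      case True then show ?thesis using \<open>(e,c) \<in> ?R'\<close> by blast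
    next
      case False
      then have "(a,e) \<in> ?R'\<^sup>+" using IH \<open>e < c\<close> \<open>a \<le> e\<close> by simp
      then show ?thesis using \<open>(e,c) \<in> ?R'\<close> by (meson trancl.trancl_into_trancl)
    qed
  next
    case False
    then have ga: "a \<le> g" "g < c" using g(1) by auto
    have "(g,c) \<in> D' (invs x)"
      unfolding D'_def
    proof (clarify, intro conjI allI impI)
      show "g < c" by fact
      fix b' assume "g < b' \<and> b' \<le> c"
      then have "bef x b' g" using g ga by auto
      then show "(g,b') \<in> invs x" using \<open>g < b' \<and> b' \<le> c\<close> by (simp add: mem_invs)
    qed
    then have "(g,c) \<in> ?R'" by blast
    show ?thesis
    proof (cases "g = a")
      case True then show ?thesis using \<open>(g,c) \<in> ?R'\<close> by blast
    next
      case False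
      then have "(a,g) \<in> ?R'\<^sup>+" using IH ga by simp
      then show ?thesis using \<open>(g,c) \<in> ?R'\<close> by (meson trancl.trancl_into_trancl)
    qed
  qed
qed

lemma D'_join:
  assumes x: "x \<in> Sn n" and K: "K \<subseteq> Pairs n"
  shows "D' ((invs x \<union> K)\<^sup>+) = D' ((D' (invs x) \<union> K)\<^sup>+)"
proof
  show "D' ((D' (invs x) \<union> K)\<^sup>+) \<subseteq> D' ((invs x \<union> K)\<^sup>+)"
    by (intro D'_mono trancl_mono_subset) (use D'_sub in blast)
  show "D' ((invs x \<union> K)\<^sup>+) \<subseteq> D' ((D' (invs x) \<union> K)\<^sup>+)"
  proof
    fix p assume p: "p \<in> D' ((invs x \<union> K)\<^sup>+)"
    obtain a c where pac: "p = (a,c)" by (cases p)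
    have ac: "a < c" "\<forall>b. a < b \<and> b \<le> c \<longrightarrow> (a,b) \<in> (invs x \<union> K)\<^sup>+" using p pac unfolding D'_def by auto
    have "(a,b) \<in> (D' (invs x) \<union> K)\<^sup>+" if "a < b" "b \<le> c" for b
      using D'_join_aux[OF x K refl, of a b] ac that by auto
    then show "p \<in> D' ((D' (invs x) \<union> K)\<^sup>+)" using pac ac(1) unfolding D'_def by auto
  qed
qed

lemma D_meet:
  assumes x: "x \<in> Sn n" and z: "z \<in> Sn n"
  shows "D (invs (wmeet n x z)) = D (invs x) \<inter> D (invs z)"
proof
  have m: "wmeet n x z \<in> Sn n" "invs (wmeet n x z) = Pairs n - ((Pairs n - invs x) \<union> (Pairs n - invs z))\<^sup>+"
    using meet_exists[OF x z] by auto
  let ?R = "(Pairs n - invs x) \<union> (Pairs n - invs z)"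
  have incR: "incr ?R" by (rule Pairs_incr) blast
  show "D (invs (wmeet n x z)) \<subseteq> D (invs x) \<inter> D (invs z)"
  proof -
    have "invs (wmeet n x z) \<subseteq> invs x" "invs (wmeet n x z) \<subseteq> invs z"
      using m(2) invs_Pairs[OF x] invs_Pairs[OF z] by auto
    then show ?thesis using D_mono by blast
  qed
  show "D (invs x) \<inter> D (invs z) \<subseteq> D (invs (wmeet n x z))"
  proof
    fix p assume p: "p \<in> D (invs x) \<inter> D (invs z)"
    obtain a c where pac: "p = (a,c)" by (cases p)
    have ac: "a < c" "\<forall>b. a \<le> b \<and> b < c \<longrightarrow> (b,c) \<in> invs x \<and> (b,c) \<in> invs z"
      using p pac unfolding D_def by auto
    have "(b,c) \<in> invs (wmeet n x z)" if "a \<le> b" "b < c" for b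
    proof -
      have "(b,c) \<in> Pairs n" using ac that invs_Pairs[OF x] by blast
      moreover have "(b,c) \<notin> ?R\<^sup>+"
      proof
        assume "(b,c) \<in> ?R\<^sup>+"
        then obtain e where e: "(b,e) \<in> ?R\<^sup>*" "(e,c) \<in> ?R" by (meson tranclD2)
        have "b \<le> e" using incr_rtrancl[OF incR e(1)] .
        have "e < c" using incR e(2) unfolding incr_def by blast
        then show False using e(2) ac \<open>b \<le> e\<close> that by auto
      qed
      ultimately show ?thesis using m(2) by blast
    qed
    then show "p \<in> D (invs (wmeet n x z))" using pac ac(1) unfolding D_def by auto
  qed
qed

lemma D'_meet:
  assumes x: "x \<in> Sn n" and z: "z \<in> Sn n"
  shows "D' (invs (wmeet n x z)) = D' (invs x) \<inter> D' (invs z)"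
proof
  have m: "wmeet n x z \<in> Sn n" "invs (wmeet n x z) = Pairs n - ((Pairs n - invs x) \<union> (Pairs n - invs z))\<^sup>+"
    using meet_exists[OF x z] by auto
  let ?R = "(Pairs n - invs x) \<union> (Pairs n - invs z)"
  have incR: "incr ?R" by (rule Pairs_incr) blast
  show "D' (invs (wmeet n x z)) \<subseteq> D' (invs x) \<inter> D' (invs z)"
  proof -
    have "invs (wmeet n x z) \<subseteq> invs x" "invs (wmeet n x z) \<subseteq> invs z"
      using m(2) invs_Pairs[OF x] invs_Pairs[OF z] by auto
    then show ?thesis using D'_mono by blast
  qed
  show "D' (invs x) \<inter> D' (invs z) \<subseteq> D' (invs (wmeet n x z))"
  proof
    fix p assume p: "p \<in> D' (invs x) \<inter> D' (invs z)"
    obtain a c where pac: "p = (a,c)" by (cases p)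
    have ac: "a < c" "\<forall>b. a < b \<and> b \<le> c \<longrightarrow> (a,b) \<in> invs x \<and> (a,b) \<in> invs z"
      using p pac unfolding D'_def by auto
    have "(a,b) \<in> invs (wmeet n x z)" if "a < b" "b \<le> c" for b
    proof -
      have "(a,b) \<in> Pairs n" using ac that invs_Pairs[OF x] by blast
      moreover have "(a,b) \<notin> ?R\<^sup>+"
      proof
        assume "(a,b) \<in> ?R\<^sup>+"
        then obtain e where e: "(a,e) \<in> ?R" "(e,b) \<in> ?R\<^sup>*" by (meson tranclD)
        have "e \<le> b" using incr_rtrancl[OF incR e(2)] .
        have "a < e" using incR e(1) unfolding incr_def by blast
        then show False using e(1) ac \<open>e \<le> b\<close> that by auto
      qed
      ultimately show ?thesis using m(2) by blast
    qed
    then show "p \<in> D' (invs (wmeet n x z))" using pac ac(1) unfolding D'_def by auto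
  qed
qed


section \<open>Block permutations\<close>

definition smono :: "nat set \<Rightarrow> (nat \<Rightarrow> nat) \<Rightarrow> bool" where
  "smono A f \<longleftrightarrow> (\<forall>x\<in>A. \<forall>y\<in>A. x < y \<longrightarrow> f x < f y)"

lemma smono_less: "smono A f \<Longrightarrow> x \<in> A \<Longrightarrow> y \<in> A \<Longrightarrow> f x < f y \<longleftrightarrow> x < y"
  unfolding smono_def by (metis linorder_neqE_nat order_less_asym)

lemma smono_le: "smono A f \<Longrightarrow> x \<in> A \<Longrightarrow> y \<in> A \<Longrightarrow> f x \<le> f y \<longleftrightarrow> x \<le> y"
  using smono_less by (metis not_le)

lemma smono_inj: assumes "smono A f" shows "inj_on f A"
proof (rule inj_onI)
  fix x y assume "x \<in> A" "y \<in> A" "f x = f y"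
  then show "x = y" using smono_less[OF assms \<open>x \<in> A\<close> \<open>y \<in> A\<close>] smono_less[OF assms \<open>y \<in> A\<close> \<open>x \<in> A\<close>]
    by (metis less_irrefl linorder_neqE_nat)
qed

lemma bef_map_inj: "inj_on f (set u) \<Longrightarrow> i \<in> set u \<Longrightarrow> j \<in> set u \<Longrightarrow> bef (map f u) (f i) (f j) \<longleftrightarrow> bef u i j"
proof
  assume inj: "inj_on f (set u)" and ij: "i \<in> set u" "j \<in> set u" and "bef (map f u) (f i) (f j)"
  then obtain i' j' where "f i' = f i" "f j' = f j" "bef u i' j'" by (auto simp: bef_map)
  moreover then have "i' \<in> set u" "j' \<in> set u" using bef_set by blast+
  ultimately show "bef u i j" using inj ij by (metis inj_onD)
next
  assume "bef u i j" then show "bef (map f u) (f i) (f j)" by (auto simp: bef_map)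
qed

lemma bef_map_notin1: "s \<notin> f ` set u \<Longrightarrow> \<not> bef (map f u) s t"
  using bef_set by fastforce

lemma bef_map_notin2: "t \<notin> f ` set u \<Longrightarrow> \<not> bef (map f u) s t"
  using bef_set by fastforce

locale blk =
  fixes p q :: nat and \<alpha> \<beta> :: "nat \<Rightarrow> nat"
  assumes am: "smono {1..p} \<alpha>" and bm: "smono {1..q} \<beta>"
    and disj: "\<alpha> ` {1..p} \<inter> \<beta> ` {1..q} = {}"
begin

definition blw :: "nat list \<Rightarrow> nat list \<Rightarrow> nat list" where
  "blw u v = map \<alpha> u @ map \<beta> v"

lemma set_blw: "u \<in> Sn p \<Longrightarrow> v \<in> Sn q \<Longrightarrow> set (blw u v) = \<alpha> ` {1..p} \<union> \<beta> ` {1..q}"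
  unfolding blw_def by (auto simp: Sn_set)

lemma blw_distinct: "u \<in> Sn p \<Longrightarrow> v \<in> Sn q \<Longrightarrow> distinct (blw u v)"
  unfolding blw_def using disj smono_inj[OF am] smono_inj[OF bm]
  by (auto simp: Sn_set Sn_distinct distinct_map)

lemma W1: "(s,t) \<in> invs (blw u v) \<Longrightarrow> s \<in> set (blw u v) \<and> t \<in> set (blw u v)"
  by (auto simp: mem_invs dest: bef_set)

lemma W2:
  assumes u: "u \<in> Sn p" and v: "v \<in> Sn q" and ik: "i \<in> {1..p}" "k \<in> {1..p}"
  shows "(\<alpha> i, \<alpha> k) \<in> invs (blw u v) \<longleftrightarrow> (i,k) \<in> invs u"
proof -
  have "\<alpha> k \<notin> \<beta> ` set v" "\<alpha> i \<notin> \<beta> ` set v" using disj ik Sn_set[OF v] by blast+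
  then have "bef (blw u v) (\<alpha> k) (\<alpha> i) \<longleftrightarrow> bef (map \<alpha> u) (\<alpha> k) (\<alpha> i)"
    unfolding blw_def bef_append using bef_map_notin1[of "\<alpha> k" \<beta> v] by auto
  also have "\<dots> \<longleftrightarrow> bef u k i"
    using bef_map_inj[of \<alpha> u k i] smono_inj[OF am] Sn_set[OF u] ik by simp
  finally show ?thesis using smono_less[OF am ik] by (simp add: mem_invs)
qed

lemma W3:
  assumes u: "u \<in> Sn p" and v: "v \<in> Sn q" and ik: "i \<in> {1..q}" "k \<in> {1..q}"
  shows "(\<beta> i, \<beta> k) \<in> invs (blw u v) \<longleftrightarrow> (i,k) \<in> invs v"
proof -
  have "\<beta> k \<notin> \<alpha> ` set u" "\<beta> i \<notin> \<alpha> ` set u" using disj ik Sn_set[OF u] by blast+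
  then have "bef (blw u v) (\<beta> k) (\<beta> i) \<longleftrightarrow> bef (map \<beta> v) (\<beta> k) (\<beta> i)"
    unfolding blw_def bef_append using bef_map_notin1[of "\<beta> k" \<alpha> u] by auto
  also have "\<dots> \<longleftrightarrow> bef v k i"
    using bef_map_inj[of \<beta> v k i] smono_inj[OF bm] Sn_set[OF v] ik by simp
  finally show ?thesis using smono_less[OF bm ik] by (simp add: mem_invs)
qed

lemma W4:
  assumes u: "u \<in> Sn p" and v: "v \<in> Sn q" and ik: "i \<in> {1..p}" "k \<in> {1..q}"
  shows "(\<alpha> i, \<beta> k) \<notin> invs (blw u v)"
proof
  assume "(\<alpha> i, \<beta> k) \<in> invs (blw u v)"
  then have b: "bef (blw u v) (\<beta> k) (\<alpha> i)" by (simp add: mem_invs)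
  have "\<beta> k \<in> set (blw u v)" "\<alpha> i \<in> set (blw u v)" using ik set_blw[OF u v] by auto
  moreover have "bef (blw u v) (\<alpha> i) (\<beta> k)" unfolding blw_def bef_append using ik Sn_set[OF u] Sn_set[OF v] by auto
  ultimately show False using b bef_asym blw_distinct[OF u v] by blast
qed

lemma W5:
  assumes u: "u \<in> Sn p" and v: "v \<in> Sn q" and ik: "i \<in> {1..q}" "k \<in> {1..p}"
  shows "(\<beta> i, \<alpha> k) \<in> invs (blw u v) \<longleftrightarrow> \<beta> i < \<alpha> k"
proof -
  have "bef (blw u v) (\<alpha> k) (\<beta> i)" unfolding blw_def bef_append using ik Sn_set[OF u] Sn_set[OF v] by auto
  then show ?thesis by (simp add: mem_invs)
qed

lemma D_block:
  assumes u: "u \<in> Sn p" and v: "v \<in> Sn q" and u': "u' \<in> Sn p" and v': "v' \<in> Sn q"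
    and Du: "D (invs u) = D (invs u')" and Dv: "D (invs v) = D (invs v')"
  shows "D (invs (blw u v)) \<subseteq> D (invs (blw u' v'))"
proof
  fix x assume x: "x \<in> D (invs (blw u v))"
  obtain s t where xst: "x = (s,t)" by (cases x)
  have st: "s < t" "\<And>b. s \<le> b \<Longrightarrow> b < t \<Longrightarrow> (b,t) \<in> invs (blw u v)"
    using x xst unfolding D_def by auto
  have "(b,t) \<in> invs (blw u' v')" if b: "s \<le> b" "b < t" for b
  proof -
    have bt: "(b,t) \<in> invs (blw u v)" using st b by blast
    then have "b \<in> set (blw u v)" "t \<in> set (blw u v)" using W1 by blast+
    then have bS: "b \<in> \<alpha> ` {1..p} \<union> \<beta> ` {1..q}" and tS: "t \<in> \<alpha> ` {1..p} \<union> \<beta> ` {1..q}"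
      using set_blw[OF u v] by auto
    show ?thesis
    proof (cases "t \<in> \<alpha> ` {1..p}")
      case True
      then obtain k where k: "k \<in> {1..p}" "t = \<alpha> k" by blast
      show ?thesis
      proof (cases "b \<in> \<alpha> ` {1..p}")
        case True
        then obtain i where i: "i \<in> {1..p}" "b = \<alpha> i" by blast
        have "i < k" using smono_less[OF am i(1) k(1)] i k b by simp
        have "(i,k) \<in> D (invs u)"
          unfolding D_def
        proof (clarify, intro conjI allI impI)
          show "i < k" by fact
          fix i' assume "i \<le> i' \<and> i' < k"
          then have i': "i' \<in> {1..p}" using i k by auto
          have "\<alpha> i \<le> \<alpha> i'" "\<alpha> i' < \<alpha> k" using smono_le[OF am i(1) i'] smono_less[OF am i' k(1)] \<open>i \<le> i' \<and> i' < k\<close> by auto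
          then have "(\<alpha> i', \<alpha> k) \<in> invs (blw u v)" using st b i k by auto
          then show "(i',k) \<in> invs u" using W2[OF u v i' k(1)] by simp
        qed
        then have "(i,k) \<in> invs u'" using Du D_sub by blast
        then show ?thesis using W2[OF u' v' i(1) k(1)] i k by simp
      next
        case False
        then obtain i where i: "i \<in> {1..q}" "b = \<beta> i" using bS by blast
        have "\<beta> i < \<alpha> k" using b i k by simp
        then show ?thesis using W5[OF u' v' i(1) k(1)] i k by simp
      qed
    next
      case False
      then obtain k where k: "k \<in> {1..q}" "t = \<beta> k" using tS by blast
      show ?thesis
      proof (cases "b \<in> \<alpha> ` {1..p}")
        case True
        then obtain i where i: "i \<in> {1..p}" "b = \<alpha> i" by blast
        then have False using W4[OF u v i(1) k(1)] bt k by simp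
        then show ?thesis ..
      next
        case False
        then obtain i where i: "i \<in> {1..q}" "b = \<beta> i" using bS by blast
        have "i < k" using smono_less[OF bm i(1) k(1)] i k b by simp
        have "(i,k) \<in> D (invs v)"
          unfolding D_def
        proof (clarify, intro conjI allI impI)
          show "i < k" by fact
          fix i' assume "i \<le> i' \<and> i' < k"
          then have i': "i' \<in> {1..q}" using i k by auto
          have "\<beta> i \<le> \<beta> i'" "\<beta> i' < \<beta> k" using smono_le[OF bm i(1) i'] smono_less[OF bm i' k(1)] \<open>i \<le> i' \<and> i' < k\<close> by auto
          then have "(\<beta> i', \<beta> k) \<in> invs (blw u v)" using st b i k by auto
          then show "(i',k) \<in> invs v" using W3[OF u v i' k(1)] by simp
        qed
        then have "(i,k) \<in> invs v'" using Dv D_sub by blast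
        then show ?thesis using W3[OF u' v' i(1) k(1)] i k by simp
      qed
    qed
  qed
  then show "x \<in> D (invs (blw u' v'))" using xst st(1) unfolding D_def by auto
qed

lemma D'_block:
  assumes u: "u \<in> Sn p" and v: "v \<in> Sn q" and u': "u' \<in> Sn p" and v': "v' \<in> Sn q"
    and Du: "D' (invs u) = D' (invs u')" and Dv: "D' (invs v) = D' (invs v')"
  shows "D' (invs (blw u v)) \<subseteq> D' (invs (blw u' v'))"
proof
  fix x assume x: "x \<in> D' (invs (blw u v))"
  obtain s t where xst: "x = (s,t)" by (cases x)
  have st: "s < t" "\<And>b. s < b \<Longrightarrow> b \<le> t \<Longrightarrow> (s,b) \<in> invs (blw u v)"
    using x xst unfolding D'_def by auto
  have "(s,b) \<in> invs (blw u' v')" if b: "s < b" "b \<le> t" for b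
  proof -
    have sb: "(s,b) \<in> invs (blw u v)" using st b by blast
    then have "s \<in> set (blw u v)" "b \<in> set (blw u v)" using W1 by blast+
    then have sS: "s \<in> \<alpha> ` {1..p} \<union> \<beta> ` {1..q}" and bS: "b \<in> \<alpha> ` {1..p} \<union> \<beta> ` {1..q}"
      using set_blw[OF u v] by auto
    show ?thesis
    proof (cases "s \<in> \<alpha> ` {1..p}")
      case True
      then obtain k where k: "k \<in> {1..p}" "s = \<alpha> k" by blast
      show ?thesis
      proof (cases "b \<in> \<alpha> ` {1..p}")
        case True
        then obtain i where i: "i \<in> {1..p}" "b = \<alpha> i" by blast
        have "k < i" using smono_less[OF am k(1) i(1)] i k b by simp
        have "(k,i) \<in> D' (invs u)"
          unfolding D'_def
        proof (clarify, intro conjI allI impI)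
          show "k < i" by fact
          fix i' assume "k < i' \<and> i' \<le> i"
          then have i': "i' \<in> {1..p}" using i k by auto
          have "\<alpha> k < \<alpha> i'" "\<alpha> i' \<le> \<alpha> i" using smono_less[OF am k(1) i'] smono_le[OF am i' i(1)] \<open>k < i' \<and> i' \<le> i\<close> by auto
          then have "(\<alpha> k, \<alpha> i') \<in> invs (blw u v)" using st b i k by auto
          then show "(k,i') \<in> invs u" using W2[OF u v k(1) i'] by simp
        qed
        then have "(k,i) \<in> invs u'" using Du D'_sub by blast
        then show ?thesis using W2[OF u' v' k(1) i(1)] i k by simp
      next
        case False
        then obtain i where i: "i \<in> {1..q}" "b = \<beta> i" using bS by blast
        then have False using W4[OF u v k(1) i(1)] sb k by simp
        then show ?thesis ..
      qed
    next
      case False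
      then obtain k where k: "k \<in> {1..q}" "s = \<beta> k" using sS by blast
      show ?thesis
      proof (cases "b \<in> \<alpha> ` {1..p}")
        case True
        then obtain i where i: "i \<in> {1..p}" "b = \<alpha> i" by blast
        have "\<beta> k < \<alpha> i" using b i k by simp
        then show ?thesis using W5[OF u' v' k(1) i(1)] i k by simp
      next
        case False
        then obtain i where i: "i \<in> {1..q}" "b = \<beta> i" using bS by blast
        have "k < i" using smono_less[OF bm k(1) i(1)] i k b by simp
        have "(k,i) \<in> D' (invs v)"
          unfolding D'_def
        proof (clarify, intro conjI allI impI)
          show "k < i" by fact
          fix i' assume "k < i' \<and> i' \<le> i"
          then have i': "i' \<in> {1..q}" using i k by auto
          have "\<beta> k < \<beta> i'" "\<beta> i' \<le> \<beta> i" using smono_less[OF bm k(1) i'] smono_le[OF bm i' i(1)] \<open>k < i' \<and> i' \<le> i\<close> by auto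
          then have "(\<beta> k, \<beta> i') \<in> invs (blw u v)" using st b i k by auto
          then show "(k,i') \<in> invs v" using W3[OF u v k(1) i'] by simp
        qed
        then have "(k,i) \<in> invs v'" using Dv D'_sub by blast
        then show ?thesis using W3[OF u' v' k(1) i(1)] i k by simp
      qed
    qed
  qed
  then show "x \<in> D' (invs (blw u' v'))" using xst st(1) unfolding D'_def by auto
qed

end


lemma blk_cross: "blk p q id (\<lambda>a. p + a)"
  unfolding blk_def smono_def by auto

lemma cross_blw: "u \<in> Sn p \<Longrightarrow> cross u v = blk.blw id (\<lambda>a. p + a) u v"
  unfolding cross_def blk.blw_def[OF blk_cross] by (simp add: Sn_length)

lemma blw_Sn:
  assumes "blk p q \<alpha> \<beta>" "\<alpha> ` {1..p} \<union> \<beta> ` {1..q} = {1..N}" "u \<in> Sn p" "v \<in> Sn q"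
  shows "blk.blw \<alpha> \<beta> u v \<in> Sn N"
  using blk.blw_distinct[OF assms(1,3,4)] blk.set_blw[OF assms(1,3,4)] assms(2) by (simp add: Sn_def)

lemma cross_img: "id ` {1..p} \<union> (\<lambda>a. p + a) ` {1..q} = {1..p+q::nat}"
proof (intro set_eqI iffI)
  fix x :: nat assume "x \<in> {1..p+q}"
  then show "x \<in> id ` {1..p} \<union> (\<lambda>a. p + a) ` {1..q}"
  proof (cases "x \<le> p")
    case False
    then have "x = p + (x - p)" "x - p \<in> {1..q}" using \<open>x \<in> {1..p+q}\<close> by auto
    then show ?thesis by blast
  qed auto
qed auto

lemma cross_Sn: assumes u: "u \<in> Sn p" and v: "v \<in> Sn q" shows "cross u v \<in> Sn (p + q)"
  using blw_Sn[OF blk_cross cross_img u v] cross_blw[OF u] by simp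

lemma cross_DU:
  assumes u: "u \<in> Sn p" and v: "v \<in> Sn q"
  shows "(i,k) \<in> D (invs u) \<longleftrightarrow> (i,k) \<in> D (invs (cross u v)) \<and> k \<le> p"
proof -
  let ?w = "cross u v"
  have W2: "\<And>i k. i \<in> {1..p} \<Longrightarrow> k \<in> {1..p} \<Longrightarrow> (i,k) \<in> invs ?w \<longleftrightarrow> (i,k) \<in> invs u"
    using blk.W2[OF blk_cross u v] cross_blw[OF u, of v] by simp
  have sw: "set ?w = {1..p+q}" using Sn_set[OF cross_Sn[OF u v]] .
  show ?thesis
  proof
    assume a: "(i,k) \<in> D (invs u)"
    then have ik: "i < k" "\<And>b. i \<le> b \<Longrightarrow> b < k \<Longrightarrow> (b,k) \<in> invs u" unfolding D_def by auto
    have "(i,k) \<in> Pairs p" using ik invs_Pairs[OF u] by blast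
    then have r: "1 \<le> i" "k \<le> p" unfolding Pairs_def by auto
    have "(b,k) \<in> invs ?w" if "i \<le> b" "b < k" for b
      using W2[of b k] ik(2)[OF that] that r by auto
    then show "(i,k) \<in> D (invs ?w) \<and> k \<le> p" using ik(1) r unfolding D_def by auto
  next
    assume a: "(i,k) \<in> D (invs ?w) \<and> k \<le> p"
    then have ik: "i < k" "\<And>b. i \<le> b \<Longrightarrow> b < k \<Longrightarrow> (b,k) \<in> invs ?w" "k \<le> p" unfolding D_def by auto
    have "i \<in> set ?w" using ik(2)[of i] ik(1) by (auto simp: mem_invs dest: bef_set)
    then have "1 \<le> i" using sw by auto
    have "(b,k) \<in> invs u" if "i \<le> b" "b < k" for b
      using W2[of b k] ik(2)[OF that] that \<open>1 \<le> i\<close> ik(3) by auto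
    then show "(i,k) \<in> D (invs u)" using ik(1) unfolding D_def by auto
  qed
qed

lemma cross_DV:
  assumes u: "u \<in> Sn p" and v: "v \<in> Sn q"
  shows "(i,k) \<in> D (invs v) \<longleftrightarrow> (p+i,p+k) \<in> D (invs (cross u v))"
proof -
  let ?w = "cross u v"
  have W3: "\<And>i k. i \<in> {1..q} \<Longrightarrow> k \<in> {1..q} \<Longrightarrow> (p+i,p+k) \<in> invs ?w \<longleftrightarrow> (i,k) \<in> invs v"
    using blk.W3[OF blk_cross u v] cross_blw[OF u, of v] by simp
  have W4: "\<And>i k. i \<in> {1..p} \<Longrightarrow> k \<in> {1..q} \<Longrightarrow> (i,p+k) \<notin> invs ?w"
    using blk.W4[OF blk_cross u v] cross_blw[OF u, of v] by simp
  have sw: "set ?w = {1..p+q}" using Sn_set[OF cross_Sn[OF u v]] .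
  show ?thesis
  proof
    assume a: "(i,k) \<in> D (invs v)"
    then have ik: "i < k" "\<And>b. i \<le> b \<Longrightarrow> b < k \<Longrightarrow> (b,k) \<in> invs v" unfolding D_def by auto
    have "(i,k) \<in> Pairs q" using ik invs_Pairs[OF v] by blast
    then have r: "1 \<le> i" "k \<le> q" unfolding Pairs_def by auto
    have "(b,p+k) \<in> invs ?w" if "p+i \<le> b" "b < p+k" for b
    proof -
      define b' where "b' = b - p"
      have b': "b = p + b'" using that unfolding b'_def by simp
      then show ?thesis using W3[of b' k] ik(2)[of b'] that r by auto
    qed
    then show "(p+i,p+k) \<in> D (invs ?w)" using ik(1) unfolding D_def by auto
  next
    assume a: "(p+i,p+k) \<in> D (invs ?w)"
    then have ik: "i < k" "\<And>b. p+i \<le> b \<Longrightarrow> b < p+k \<Longrightarrow> (b,p+k) \<in> invs ?w" unfolding D_def by auto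
    have "p+k \<in> set ?w" using ik(2)[of "p+i"] ik(1) by (auto simp: mem_invs dest: bef_set)
    then have "k \<le> q" using sw by auto
    have i1: "1 \<le> i"
    proof (rule ccontr)
      assume "\<not> 1 \<le> i"
      then have "i = 0" by simp
      then have pk: "(p,p+k) \<in> invs ?w" using ik(2)[of p] ik(1) by simp
      then have "p \<in> set ?w" by (auto simp: mem_invs dest: bef_set)
      then have "p \<in> {1..p}" using sw by auto
      then show False using W4[of p k] pk ik(1) \<open>k \<le> q\<close> \<open>i = 0\<close> by auto
    qed
    have "(b,k) \<in> invs v" if "i \<le> b" "b < k" for b
      using W3[of b k] ik(2)[of "p+b"] that i1 \<open>k \<le> q\<close> by auto
    then show "(i,k) \<in> D (invs v)" using ik(1) unfolding D_def by auto
  qed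
qed

lemma cross_D'U:
  assumes u: "u \<in> Sn p" and v: "v \<in> Sn q"
  shows "(i,k) \<in> D' (invs u) \<longleftrightarrow> (i,k) \<in> D' (invs (cross u v)) \<and> k \<le> p"
proof -
  let ?w = "cross u v"
  have W2: "\<And>i k. i \<in> {1..p} \<Longrightarrow> k \<in> {1..p} \<Longrightarrow> (i,k) \<in> invs ?w \<longleftrightarrow> (i,k) \<in> invs u"
    using blk.W2[OF blk_cross u v] cross_blw[OF u, of v] by simp
  have sw: "set ?w = {1..p+q}" using Sn_set[OF cross_Sn[OF u v]] .
  show ?thesis
  proof
    assume a: "(i,k) \<in> D' (invs u)"
    then have ik: "i < k" "\<And>b. i < b \<Longrightarrow> b \<le> k \<Longrightarrow> (i,b) \<in> invs u" unfolding D'_def by auto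
    have "(i,k) \<in> Pairs p" using ik invs_Pairs[OF u] by blast
    then have r: "1 \<le> i" "k \<le> p" unfolding Pairs_def by auto
    have "(i,b) \<in> invs ?w" if "i < b" "b \<le> k" for b
      using W2[of i b] ik(2)[OF that] that r by auto
    then show "(i,k) \<in> D' (invs ?w) \<and> k \<le> p" using ik(1) r unfolding D'_def by auto
  next
    assume a: "(i,k) \<in> D' (invs ?w) \<and> k \<le> p"
    then have ik: "i < k" "\<And>b. i < b \<Longrightarrow> b \<le> k \<Longrightarrow> (i,b) \<in> invs ?w" "k \<le> p" unfolding D'_def by auto
    have "i \<in> set ?w" using ik(2)[of k] ik(1) by (auto simp: mem_invs dest: bef_set)
    then have "1 \<le> i" using sw by auto
    have "(i,b) \<in> invs u" if "i < b" "b \<le> k" for b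
      using W2[of i b] ik(2)[OF that] that \<open>1 \<le> i\<close> ik(3) by auto
    then show "(i,k) \<in> D' (invs u)" using ik(1) unfolding D'_def by auto
  qed
qed

lemma cross_D'V:
  assumes u: "u \<in> Sn p" and v: "v \<in> Sn q"
  shows "(i,k) \<in> D' (invs v) \<longleftrightarrow> (p+i,p+k) \<in> D' (invs (cross u v))"
proof -
  let ?w = "cross u v"
  have W3: "\<And>i k. i \<in> {1..q} \<Longrightarrow> k \<in> {1..q} \<Longrightarrow> (p+i,p+k) \<in> invs ?w \<longleftrightarrow> (i,k) \<in> invs v"
    using blk.W3[OF blk_cross u v] cross_blw[OF u, of v] by simp
  have W4: "\<And>i k. i \<in> {1..p} \<Longrightarrow> k \<in> {1..q} \<Longrightarrow> (i,p+k) \<notin> invs ?w"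
    using blk.W4[OF blk_cross u v] cross_blw[OF u, of v] by simp
  have sw: "set ?w = {1..p+q}" using Sn_set[OF cross_Sn[OF u v]] .
  show ?thesis
  proof
    assume a: "(i,k) \<in> D' (invs v)"
    then have ik: "i < k" "\<And>b. i < b \<Longrightarrow> b \<le> k \<Longrightarrow> (i,b) \<in> invs v" unfolding D'_def by auto
    have "(i,k) \<in> Pairs q" using ik invs_Pairs[OF v] by blast
    then have r: "1 \<le> i" "k \<le> q" unfolding Pairs_def by auto
    have "(p+i,b) \<in> invs ?w" if "p+i < b" "b \<le> p+k" for b
    proof -
      define b' where "b' = b - p"
      have b': "b = p + b'" using that unfolding b'_def by simp
      then show ?thesis using W3[of i b'] ik(2)[of b'] that r by auto
    qed
    then show "(p+i,p+k) \<in> D' (invs ?w)" using ik(1) unfolding D'_def by auto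
  next
    assume a: "(p+i,p+k) \<in> D' (invs ?w)"
    then have ik: "i < k" "\<And>b. p+i < b \<Longrightarrow> b \<le> p+k \<Longrightarrow> (p+i,b) \<in> invs ?w" unfolding D'_def by auto
    have pk: "(p+i,p+k) \<in> invs ?w" using ik(2)[of "p+k"] ik(1) by simp
    then have "p+k \<in> set ?w" by (auto simp: mem_invs dest: bef_set)
    then have "k \<le> q" using sw by auto
    have i1: "1 \<le> i"
    proof (rule ccontr)
      assume "\<not> 1 \<le> i"
      then have "i = 0" by simp
      then have "p \<in> set ?w" using pk by (auto simp: mem_invs dest: bef_set)
      then have "p \<in> {1..p}" using sw by auto
      then show False using W4[of p k] pk ik(1) \<open>k \<le> q\<close> \<open>i = 0\<close> by auto
    qed
    have "(i,b) \<in> invs v" if "i < b" "b \<le> k" for b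
      using W3[of i b] ik(2)[of "p+b"] that i1 \<open>k \<le> q\<close> by auto
    then show "(i,k) \<in> D' (invs v)" using ik(1) unfolding D'_def by auto
  qed
qed

lemma nth_image: "(\<lambda>i. xs ! i) ` {0..<length xs} = set xs"
  by (auto simp: in_set_conv_nth)

lemma sorted_nth_mono:
  assumes "sorted_wrt (<) xs" "i < j" "j < length xs"
  shows "xs ! i < xs ! j"
  using assms by (simp add: sorted_wrt_nth_less)

lemma blk_phi:
  assumes Q: "Q \<subseteq> {1..p+q}" "card Q = p"
  shows "blk p q (\<lambda>i. sorted_list_of_set Q ! (i - 1)) (\<lambda>j. sorted_list_of_set ({1..p+q} - Q) ! (j - 1))"
    and "(\<lambda>i. sorted_list_of_set Q ! (i - 1)) ` {1..p} \<union> (\<lambda>j. sorted_list_of_set ({1..p+q} - Q) ! (j - 1)) ` {1..q} = {1..p+q}"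
    and "phi (p+q) Q u v = blk.blw (\<lambda>i. sorted_list_of_set Q ! (i - 1)) (\<lambda>j. sorted_list_of_set ({1..p+q} - Q) ! (j - 1)) u v"
proof -
  let ?qs = "sorted_list_of_set Q" and ?rs = "sorted_list_of_set ({1..p+q} - Q)"
  have fQ: "finite Q" using Q(1) finite_subset by blast
  have lq: "length ?qs = p" using Q fQ by simp
  have cR: "card ({1..p+q} - Q) = q" using Q fQ by (simp add: card_Diff_subset)
  have lr: "length ?rs = q" using cR by simp
  have sq: "sorted_wrt (<) ?qs" "set ?qs = Q" using fQ by auto
  have sr: "sorted_wrt (<) ?rs" "set ?rs = {1..p+q} - Q" by auto
  have imq: "(\<lambda>i. ?qs ! (i - 1)) ` {1..p} = Q"
  proof -
    have "(\<lambda>i. ?qs ! (i - 1)) ` {1..p} = (\<lambda>i. ?qs ! i) ` {0..<p}"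
    proof (intro set_eqI iffI)
      fix y assume "y \<in> (\<lambda>i. ?qs ! (i - 1)) ` {1..p}"
      then obtain i where "i \<in> {1..p}" "y = ?qs ! (i - 1)" by blast
      then show "y \<in> (\<lambda>i. ?qs ! i) ` {0..<p}" by (intro image_eqI[of _ _ "i - 1"]) auto
    next
      fix y assume "y \<in> (\<lambda>i. ?qs ! i) ` {0..<p}"
      then obtain i where "i \<in> {0..<p}" "y = ?qs ! i" by blast
      then show "y \<in> (\<lambda>i. ?qs ! (i - 1)) ` {1..p}" by (intro image_eqI[of _ _ "i + 1"]) auto
    qed
    also have "\<dots> = set ?qs" using nth_image[of ?qs] lq by metis
    finally show ?thesis using sq(2) by simp
  qed
  have imr: "(\<lambda>j. ?rs ! (j - 1)) ` {1..q} = {1..p+q} - Q"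
  proof -
    have "(\<lambda>i. ?rs ! (i - 1)) ` {1..q} = (\<lambda>i. ?rs ! i) ` {0..<q}"
    proof (intro set_eqI iffI)
      fix y assume "y \<in> (\<lambda>i. ?rs ! (i - 1)) ` {1..q}"
      then obtain i where "i \<in> {1..q}" "y = ?rs ! (i - 1)" by blast
      then show "y \<in> (\<lambda>i. ?rs ! i) ` {0..<q}" by (intro image_eqI[of _ _ "i - 1"]) auto
    next
      fix y assume "y \<in> (\<lambda>i. ?rs ! i) ` {0..<q}"
      then obtain i where "i \<in> {0..<q}" "y = ?rs ! i" by blast
      then show "y \<in> (\<lambda>i. ?rs ! (i - 1)) ` {1..q}" by (intro image_eqI[of _ _ "i + 1"]) auto
    qed
    also have "\<dots> = set ?rs" using nth_image[of ?rs] lr by metis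
    finally show ?thesis using sr(2) by simp
  qed
  show b: "blk p q (\<lambda>i. ?qs ! (i - 1)) (\<lambda>j. ?rs ! (j - 1))"
    unfolding blk_def smono_def
  proof (intro conjI ballI impI)
    fix x y assume "x \<in> {1..p}" "y \<in> {1..p}" "x < y"
    then show "?qs ! (x - 1) < ?qs ! (y - 1)" using sorted_nth_mono[OF sq(1), of "x-1" "y-1"] lq by auto
  next
    fix x y assume "x \<in> {1..q}" "y \<in> {1..q}" "x < y"
    then show "?rs ! (x - 1) < ?rs ! (y - 1)" using sorted_nth_mono[OF sr(1), of "x-1" "y-1"] lr by auto
  next
    show "(\<lambda>i. ?qs ! (i - 1)) ` {1..p} \<inter> (\<lambda>j. ?rs ! (j - 1)) ` {1..q} = {}" using imq imr by blast
  qed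
  show "(\<lambda>i. ?qs ! (i - 1)) ` {1..p} \<union> (\<lambda>j. ?rs ! (j - 1)) ` {1..q} = {1..p+q}" using imq imr Q(1) by blast
  show "phi (p+q) Q u v = blk.blw (\<lambda>i. ?qs ! (i - 1)) (\<lambda>j. ?rs ! (j - 1)) u v"
    unfolding phi_def blk.blw_def[OF b] Let_def by simp
qed

section \<open>The sylvester and anti-sylvester families\<close>

definition Syl :: "nat \<Rightarrow> (nat list \<times> nat list) set" where
  "Syl n = {(x,y). x \<in> Sn n \<and> y \<in> Sn n \<and> D (invs x) = D (invs y)}"

definition ASyl :: "nat \<Rightarrow> (nat list \<times> nat list) set" where
  "ASyl n = {(x,y). x \<in> Sn n \<and> y \<in> Sn n \<and> D' (invs x) = D' (invs y)}"

lemma equiv_kernel: "equiv (Sn n) {(x,y). x \<in> Sn n \<and> y \<in> Sn n \<and> f x = f y}"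
  unfolding equiv_def refl_on_def sym_def trans_def by auto

lemma Syl_lattice: "lattice_congruence n (Syl n)"
  unfolding lattice_congruence_def
proof (intro conjI allI impI)
  show "equiv (Sn n) (Syl n)" unfolding Syl_def by (rule equiv_kernel)
  fix x y z assume xy: "(x,y) \<in> Syl n" and z: "z \<in> Sn n"
  then have x: "x \<in> Sn n" and y: "y \<in> Sn n" and Dxy: "D (invs x) = D (invs y)" unfolding Syl_def by auto
  have jx: "wjoin n x z \<in> Sn n" "invs (wjoin n x z) = (invs x \<union> invs z)\<^sup>+" using join_exists[OF x z] by auto
  have jy: "wjoin n y z \<in> Sn n" "invs (wjoin n y z) = (invs y \<union> invs z)\<^sup>+" using join_exists[OF y z] by auto
  have "D (invs (wjoin n x z)) = D (invs (wjoin n y z))"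
    using jx(2) jy(2) D_join[OF x invs_Pairs[OF z]] D_join[OF y invs_Pairs[OF z]] Dxy by simp
  then show "(wjoin n x z, wjoin n y z) \<in> Syl n" using jx(1) jy(1) unfolding Syl_def by auto
  have "D (invs (wmeet n x z)) = D (invs (wmeet n y z))"
    using D_meet[OF x z] D_meet[OF y z] Dxy by simp
  then show "(wmeet n x z, wmeet n y z) \<in> Syl n" using meet_exists[OF x z] meet_exists[OF y z] unfolding Syl_def by auto
qed

lemma ASyl_lattice: "lattice_congruence n (ASyl n)"
  unfolding lattice_congruence_def
proof (intro conjI allI impI)
  show "equiv (Sn n) (ASyl n)" unfolding ASyl_def by (rule equiv_kernel)
  fix x y z assume xy: "(x,y) \<in> ASyl n" and z: "z \<in> Sn n"
  then have x: "x \<in> Sn n" and y: "y \<in> Sn n" and Dxy: "D' (invs x) = D' (invs y)" unfolding ASyl_def by auto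
  have jx: "wjoin n x z \<in> Sn n" "invs (wjoin n x z) = (invs x \<union> invs z)\<^sup>+" using join_exists[OF x z] by auto
  have jy: "wjoin n y z \<in> Sn n" "invs (wjoin n y z) = (invs y \<union> invs z)\<^sup>+" using join_exists[OF y z] by auto
  have "D' (invs (wjoin n x z)) = D' (invs (wjoin n y z))"
    using jx(2) jy(2) D'_join[OF x invs_Pairs[OF z]] D'_join[OF y invs_Pairs[OF z]] Dxy by simp
  then show "(wjoin n x z, wjoin n y z) \<in> ASyl n" using jx(1) jy(1) unfolding ASyl_def by auto
  have "D' (invs (wmeet n x z)) = D' (invs (wmeet n y z))"
    using D'_meet[OF x z] D'_meet[OF y z] Dxy by simp
  then show "(wmeet n x z, wmeet n y z) \<in> ASyl n" using meet_exists[OF x z] meet_exists[OF y z] unfolding ASyl_def by auto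
qed

lemma Syl_translational: "translational Syl"
  unfolding translational_def
proof (intro allI impI)
  fix p q u u' v v' assume u: "u \<in> Sn p" and u': "u' \<in> Sn p" and v: "v \<in> Sn q" and v': "v' \<in> Sn q"
  have S: "cross u v \<in> Sn (p+q)" "cross u' v' \<in> Sn (p+q)" using cross_Sn u v u' v' by auto
  show "(cross u v, cross u' v') \<in> Syl (p + q) \<longleftrightarrow> (u, u') \<in> Syl p \<and> (v, v') \<in> Syl q"
  proof
    assume "(cross u v, cross u' v') \<in> Syl (p + q)"
    then have eq: "D (invs (cross u v)) = D (invs (cross u' v'))" unfolding Syl_def by auto
    have "D (invs u) = D (invs u')"
    proof (intro set_eqI)
      fix x :: "nat \<times> nat" obtain i k where "x = (i,k)" by (cases x)
      then show "x \<in> D (invs u) \<longleftrightarrow> x \<in> D (invs u')" using cross_DU[OF u v] cross_DU[OF u' v'] eq by simp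
    qed
    moreover have "D (invs v) = D (invs v')"
    proof (intro set_eqI)
      fix x :: "nat \<times> nat" obtain i k where "x = (i,k)" by (cases x)
      then show "x \<in> D (invs v) \<longleftrightarrow> x \<in> D (invs v')" using cross_DV[OF u v] cross_DV[OF u' v'] eq by simp
    qed
    ultimately show "(u, u') \<in> Syl p \<and> (v, v') \<in> Syl q" using u u' v v' unfolding Syl_def by auto
  next
    assume "(u, u') \<in> Syl p \<and> (v, v') \<in> Syl q"
    then have eq: "D (invs u) = D (invs u')" "D (invs v) = D (invs v')" unfolding Syl_def by auto
    have "D (invs (cross u v)) = D (invs (cross u' v'))"
      using blk.D_block[OF blk_cross u v u' v' eq] blk.D_block[OF blk_cross u' v' u v eq[symmetric]]
        cross_blw[OF u] cross_blw[OF u'] by simp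
    then show "(cross u v, cross u' v') \<in> Syl (p + q)" using S unfolding Syl_def by auto
  qed
qed

lemma ASyl_translational: "translational ASyl"
  unfolding translational_def
proof (intro allI impI)
  fix p q u u' v v' assume u: "u \<in> Sn p" and u': "u' \<in> Sn p" and v: "v \<in> Sn q" and v': "v' \<in> Sn q"
  have S: "cross u v \<in> Sn (p+q)" "cross u' v' \<in> Sn (p+q)" using cross_Sn u v u' v' by auto
  show "(cross u v, cross u' v') \<in> ASyl (p + q) \<longleftrightarrow> (u, u') \<in> ASyl p \<and> (v, v') \<in> ASyl q"
  proof
    assume "(cross u v, cross u' v') \<in> ASyl (p + q)"
    then have eq: "D' (invs (cross u v)) = D' (invs (cross u' v'))" unfolding ASyl_def by auto
    have "D' (invs u) = D' (invs u')"
    proof (intro set_eqI)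
      fix x :: "nat \<times> nat" obtain i k where "x = (i,k)" by (cases x)
      then show "x \<in> D' (invs u) \<longleftrightarrow> x \<in> D' (invs u')" using cross_D'U[OF u v] cross_D'U[OF u' v'] eq by simp
    qed
    moreover have "D' (invs v) = D' (invs v')"
    proof (intro set_eqI)
      fix x :: "nat \<times> nat" obtain i k where "x = (i,k)" by (cases x)
      then show "x \<in> D' (invs v) \<longleftrightarrow> x \<in> D' (invs v')" using cross_D'V[OF u v] cross_D'V[OF u' v'] eq by simp
    qed
    ultimately show "(u, u') \<in> ASyl p \<and> (v, v') \<in> ASyl q" using u u' v v' unfolding ASyl_def by auto
  next
    assume "(u, u') \<in> ASyl p \<and> (v, v') \<in> ASyl q"
    then have eq: "D' (invs u) = D' (invs u')" "D' (invs v) = D' (invs v')" unfolding ASyl_def by auto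
    have "D' (invs (cross u v)) = D' (invs (cross u' v'))"
      using blk.D'_block[OF blk_cross u v u' v' eq] blk.D'_block[OF blk_cross u' v' u v eq[symmetric]]
        cross_blw[OF u] cross_blw[OF u'] by simp
    then show "(cross u v, cross u' v') \<in> ASyl (p + q)" using S unfolding ASyl_def by auto
  qed
qed

lemma Syl_insertional: "insertional Syl"
  unfolding insertional_def
proof (intro allI impI)
  fix p q Q u u' v v'
  assume Q: "Q \<subseteq> {1..p + q}" "card Q = p" and u: "u \<in> Sn p" and u': "u' \<in> Sn p"
    and v: "v \<in> Sn q" and v': "v' \<in> Sn q" and uu: "(u, u') \<in> Syl p" and vv: "(v, v') \<in> Syl q"
  note b = blk_phi[OF Q]
  have eq: "D (invs u) = D (invs u')" "D (invs v) = D (invs v')" using uu vv unfolding Syl_def by auto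
  show "(phi (p + q) Q u v, phi (p + q) Q u' v') \<in> Syl (p + q)"
    unfolding Syl_def b(3)[of u v] b(3)[of u' v']
    using blw_Sn[OF b(1) b(2) u v] blw_Sn[OF b(1) b(2) u' v']
      blk.D_block[OF b(1) u v u' v' eq] blk.D_block[OF b(1) u' v' u v eq[symmetric]] by auto
qed

lemma ASyl_insertional: "insertional ASyl"
  unfolding insertional_def
proof (intro allI impI)
  fix p q Q u u' v v'
  assume Q: "Q \<subseteq> {1..p + q}" "card Q = p" and u: "u \<in> Sn p" and u': "u' \<in> Sn p"
    and v: "v \<in> Sn q" and v': "v' \<in> Sn q" and uu: "(u, u') \<in> ASyl p" and vv: "(v, v') \<in> ASyl q"
  note b = blk_phi[OF Q]
  have eq: "D' (invs u) = D' (invs u')" "D' (invs v) = D' (invs v')" using uu vv unfolding ASyl_def by auto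
  show "(phi (p + q) Q u v, phi (p + q) Q u' v') \<in> ASyl (p + q)"
    unfolding ASyl_def b(3)[of u v] b(3)[of u' v']
    using blw_Sn[OF b(1) b(2) u v] blw_Sn[OF b(1) b(2) u' v']
      blk.D'_block[OF b(1) u v u' v' eq] blk.D'_block[OF b(1) u' v' u v eq[symmetric]] by auto
qed

lemma Syl_H: "H_family Syl"
  unfolding H_family_def using Syl_lattice Syl_translational Syl_insertional by blast

lemma ASyl_H: "H_family ASyl"
  unfolding H_family_def using ASyl_lattice ASyl_translational ASyl_insertional by blast


lemma swap_invs:
  assumes d: "distinct (T @ [c,a] @ U)" and ac: "a < c"
  shows "invs (T @ [c,a] @ U) = insert (a,c) (invs (T @ [a,c] @ U))"
    and "(a,c) \<notin> invs (T @ [a,c] @ U)"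
proof -
  have d': "distinct (T @ [a,c] @ U)" using d by auto
  have b1: "bef (T @ [c,a] @ U) s t \<longleftrightarrow> bef (T @ [a,c] @ U) s t \<or> (s = c \<and> t = a)"
    if "\<not> (s = a \<and> t = c)" for s t
    using that by (auto simp: bef_append)
  have b2: "bef (T @ [a,c] @ U) a c" by (simp add: bef_append)
  have b3: "\<not> bef (T @ [a,c] @ U) c a" using bef_asym[OF d' b2] .
  show "(a,c) \<notin> invs (T @ [a,c] @ U)" using b3 by (simp add: mem_invs)
  show "invs (T @ [c,a] @ U) = insert (a,c) (invs (T @ [a,c] @ U))"
  proof (intro set_eqI)
    fix y :: "nat \<times> nat"
    obtain s t where y: "y = (s,t)" by (cases y)
    show "y \<in> invs (T @ [c,a] @ U) \<longleftrightarrow> y \<in> insert (a,c) (invs (T @ [a,c] @ U))"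
    proof (cases "s < t")
      case True
      then have "\<not> (t = a \<and> s = c)" using ac by auto
      then show ?thesis using y b1[of t s] True by (auto simp: mem_invs)
    next
      case False then show ?thesis using y ac by (auto simp: mem_invs)
    qed
  qed
qed

lemma D_insert:
  assumes "(b,c) \<notin> I" "a < b" "b < c"
  shows "D (insert (a,c) I) = D I"
proof
  show "D I \<subseteq> D (insert (a,c) I)" by (rule D_mono) blast
  show "D (insert (a,c) I) \<subseteq> D I"
  proof
    fix y assume y: "y \<in> D (insert (a,c) I)"
    obtain s t where yst: "y = (s,t)" by (cases y)
    have st: "s < t" "\<And>b'. s \<le> b' \<Longrightarrow> b' < t \<Longrightarrow> (b',t) \<in> insert (a,c) I" using y yst unfolding D_def by auto
    have "(b',t) \<in> I" if "s \<le> b'" "b' < t" for b'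
    proof (rule ccontr)
      assume "(b',t) \<notin> I"
      then have "b' = a" "t = c" using st(2)[OF that] by auto
      then have "(b,c) \<in> insert (a,c) I" using st(2)[of b] that assms by auto
      then show False using assms by auto
    qed
    then show "y \<in> D I" using yst st(1) unfolding D_def by auto
  qed
qed

lemma D'_insert:
  assumes "(a,b) \<notin> I" "a < b" "b < c"
  shows "D' (insert (a,c) I) = D' I"
proof
  show "D' I \<subseteq> D' (insert (a,c) I)" by (rule D'_mono) blast
  show "D' (insert (a,c) I) \<subseteq> D' I"
  proof
    fix y assume y: "y \<in> D' (insert (a,c) I)"
    obtain s t where yst: "y = (s,t)" by (cases y)
    have st: "s < t" "\<And>b'. s < b' \<Longrightarrow> b' \<le> t \<Longrightarrow> (s,b') \<in> insert (a,c) I" using y yst unfolding D'_def by auto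
    have "(s,b') \<in> I" if "s < b'" "b' \<le> t" for b'
    proof (rule ccontr)
      assume "(s,b') \<notin> I"
      then have "s = a" "b' = c" using st(2)[OF that] by auto
      then have "(a,b) \<in> insert (a,c) I" using st(2)[of b] that assms by auto
      then show False using assms by auto
    qed
    then show "y \<in> D' I" using yst st(1) unfolding D'_def by auto
  qed
qed

lemma swap_D:
  assumes x: "x = T @ [c,a] @ U" "distinct x" and ac: "a < c" and b: "b \<in> set T" "a < b" "b < c"
  shows "D (invs x) = D (invs (T @ [a,c] @ U))"
proof -
  have d': "distinct (T @ [a,c] @ U)" using x by auto
  have "bef (T @ [a,c] @ U) b c" using b by (auto simp: bef_append)
  then have "\<not> bef (T @ [a,c] @ U) c b" using bef_asym[OF d'] by blast
  then have "(b,c) \<notin> invs (T @ [a,c] @ U)" by (simp add: mem_invs)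
  then show ?thesis using swap_invs(1)[of T c a U] x ac D_insert[of b c _ a] b by simp
qed

lemma swap_D':
  assumes x: "x = T @ [c,a] @ U" "distinct x" and ac: "a < c" and b: "b \<in> set U" "a < b" "b < c"
  shows "D' (invs x) = D' (invs (T @ [a,c] @ U))"
proof -
  have d': "distinct (T @ [a,c] @ U)" using x by auto
  have "bef (T @ [a,c] @ U) a b" using b by (auto simp: bef_append)
  then have "\<not> bef (T @ [a,c] @ U) b a" using bef_asym[OF d'] by blast
  then have "(a,b) \<notin> invs (T @ [a,c] @ U)" by (simp add: mem_invs)
  then show ?thesis using swap_invs(1)[of T c a U] x ac D'_insert[of a b _ c] b by simp
qed

section \<open>Standardization\<close>

definition rk :: "nat set \<Rightarrow> nat \<Rightarrow> nat" where
  "rk S e = card {e' \<in> S. e' \<le> e}"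

definition st :: "nat list \<Rightarrow> nat list" where
  "st w = map (rk (set w)) w"

lemma rk_mono: assumes "finite S" "e' \<in> S" "e < e'" shows "rk S e < rk S e'"
proof -
  have "e' \<in> {x \<in> S. x \<le> e'}" "e' \<notin> {x \<in> S. x \<le> e}" using assms by auto
  moreover have "{x \<in> S. x \<le> e} \<subseteq> {x \<in> S. x \<le> e'}" using assms by auto
  ultimately have "{x \<in> S. x \<le> e} \<subset> {x \<in> S. x \<le> e'}" by blast
  then show ?thesis unfolding rk_def using assms(1) by (simp add: psubset_card_mono)
qed

lemma rk_less_iff: "finite S \<Longrightarrow> e \<in> S \<Longrightarrow> e' \<in> S \<Longrightarrow> rk S e < rk S e' \<longleftrightarrow> e < e'"
  using rk_mono by (metis linorder_neqE_nat order_less_asym)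

lemma rk_bounds: assumes "finite S" "e \<in> S" shows "1 \<le> rk S e" "rk S e \<le> card S"
proof -
  have "e \<in> {x \<in> S. x \<le> e}" using assms by auto
  then have "{x \<in> S. x \<le> e} \<noteq> {}" by blast
  then show "1 \<le> rk S e" unfolding rk_def using assms(1) by (simp add: Suc_leI card_gt_0_iff)
  show "rk S e \<le> card S" unfolding rk_def using assms(1) by (intro card_mono) auto
qed

lemma st_Sn: assumes d: "distinct w" shows "st w \<in> Sn (length w)"
proof -
  let ?S = "set w"
  have f: "finite ?S" by simp
  have inj: "inj_on (rk ?S) ?S"
    by (rule inj_onI) (metis rk_less_iff f linorder_neqE_nat less_irrefl)
  have ds: "distinct (st w)" unfolding st_def using d inj by (simp add: distinct_map)
  have cS: "card ?S = length w" using distinct_card[OF d] .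
  have sub: "set (st w) \<subseteq> {1..length w}" unfolding st_def using rk_bounds[OF f] cS by auto
  have "card (set (st w)) = length w" using distinct_card[OF ds] by (simp add: st_def)
  then have "set (st w) = {1..length w}" using sub by (intro card_subset_eq) auto
  then show ?thesis using ds by (simp add: Sn_def)
qed

lemma length_st[simp]: "length (st w) = length w" by (simp add: st_def)

lemma rk_idx:
  assumes d: "distinct w" and i: "i < length w"
  shows "rk (set w) (w ! i) = card {j. j < length w \<and> w ! j \<le> w ! i}"
proof -
  have "{e' \<in> set w. e' \<le> w ! i} = (\<lambda>j. w ! j) ` {j. j < length w \<and> w ! j \<le> w ! i}"
    by (auto simp: in_set_conv_nth)
  moreover have "inj_on (\<lambda>j. w ! j) {j. j < length w \<and> w ! j \<le> w ! i}"
    using d by (auto simp: inj_on_def nth_eq_iff_index_eq)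
  ultimately show ?thesis unfolding rk_def by (simp add: card_image)
qed

lemma rk_perm: assumes v: "v \<in> Sn m" and i: "i < length v" shows "rk (set v) (v ! i) = v ! i"
proof -
  have "v ! i \<in> {1..m}" using Sn_set[OF v] i nth_mem by blast
  then have "{e' \<in> set v. e' \<le> v ! i} = {1..v ! i}" using Sn_set[OF v] by auto
  then show ?thesis unfolding rk_def by simp
qed

definition ord_iso :: "nat list \<Rightarrow> nat list \<Rightarrow> bool" where
  "ord_iso w v \<longleftrightarrow> map (\<lambda>x. map (\<lambda>y. x < y) w) w = map (\<lambda>x. map (\<lambda>y. x < y) v) v"

lemma ord_iso_D:
  assumes "ord_iso w v"
  shows "length w = length v" "i < length w \<Longrightarrow> j < length w \<Longrightarrow> w ! i < w ! j \<longleftrightarrow> v ! i < v ! j"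
proof -
  have e: "map (\<lambda>x. map (\<lambda>y. x < y) w) w = map (\<lambda>x. map (\<lambda>y. x < y) v) v" using assms ord_iso_def by blast
  from e show l: "length w = length v" by (metis length_map)
  assume ij: "i < length w" "j < length w"
  have "map (\<lambda>x. map (\<lambda>y. x < y) w) w ! i ! j = map (\<lambda>x. map (\<lambda>y. x < y) v) v ! i ! j" using e by simp
  then show "w ! i < w ! j \<longleftrightarrow> v ! i < v ! j" using ij l by simp
qed

lemma ord_isoI:
  assumes "length w = length v" "\<And>i j. i < length w \<Longrightarrow> j < length w \<Longrightarrow> w ! i < w ! j \<longleftrightarrow> v ! i < v ! j"
  shows "ord_iso w v"
  unfolding ord_iso_def using assms by (intro nth_equalityI) auto

lemma st_eq:
  assumes d: "distinct w" and v: "v \<in> Sn (length w)" and oi: "ord_iso w v"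
  shows "st w = v"
proof (rule nth_equalityI)
  have l: "length w = length v" using ord_iso_D(1)[OF oi] .
  show "length (st w) = length v" using l by simp
  fix i assume i: "i < length (st w)"
  then have i': "i < length w" by simp
  have "st w ! i = card {j. j < length w \<and> w ! j \<le> w ! i}" unfolding st_def using rk_idx[OF d i'] i' by simp
  also have "{j. j < length w \<and> w ! j \<le> w ! i} = {j. j < length v \<and> v ! j \<le> v ! i}"
    using ord_iso_D(2)[OF oi i'] l by (auto simp: not_less[symmetric])
  also have "card \<dots> = rk (set v) (v ! i)" using rk_idx[OF Sn_distinct[OF v]] i' l by simp
  also have "\<dots> = v ! i" using rk_perm[OF v] i' l by simp
  finally show "st w ! i = v ! i" .
qed

lemma ord_iso_st: assumes d: "distinct w" shows "ord_iso w (st w)"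
proof (rule ord_isoI)
  show "length w = length (st w)" by simp
  fix i j assume "i < length w" "j < length w"
  then show "w ! i < w ! j \<longleftrightarrow> st w ! i < st w ! j"
    unfolding st_def using rk_less_iff[of "set w" "w ! i" "w ! j"] by simp
qed

lemma st_map_mono:
  assumes d: "distinct zs" and f: "smono (set zs) f"
  shows "st (map f zs) = st zs"
proof -
  have inj: "inj_on f (set zs)" using smono_inj[OF f] .
  have dm: "distinct (map f zs)" using d inj by (simp add: distinct_map)
  have "ord_iso (map f zs) (st zs)"
  proof (rule ord_isoI)
    show "length (map f zs) = length (st zs)" by simp
    fix i j assume "i < length (map f zs)" "j < length (map f zs)"
    then have ij: "i < length zs" "j < length zs" by auto
    then have "f (zs ! i) < f (zs ! j) \<longleftrightarrow> zs ! i < zs ! j" using smono_less[OF f] by simp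
    also have "\<dots> \<longleftrightarrow> st zs ! i < st zs ! j" using ord_iso_D(2)[OF ord_iso_st[OF d]] ij by simp
    finally show "map f zs ! i < map f zs ! j \<longleftrightarrow> st zs ! i < st zs ! j" using ij by simp
  qed
  then show ?thesis using st_eq[OF dm] st_Sn[OF d] by simp
qed


lemma sl_nth_rank:
  assumes f: "finite S" and e: "e \<in> S"
  shows "sorted_list_of_set S ! (rk S e - 1) = e"
proof -
  let ?L = "sorted_list_of_set S"
  have L: "distinct ?L" "set ?L = S" "sorted_wrt (<) ?L" using f by auto
  obtain j where j: "j < length ?L" "?L ! j = e" using e L(2) by (metis in_set_conv_nth)
  have "rk S e = rk (set ?L) (?L ! j)" using L(2) j by simp
  also have "\<dots> = card {i. i < length ?L \<and> ?L ! i \<le> ?L ! j}" using rk_idx[OF L(1) j(1)] .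
  also have "{i. i < length ?L \<and> ?L ! i \<le> ?L ! j} = {0..j}"
  proof (intro set_eqI iffI)
    fix i assume "i \<in> {i. i < length ?L \<and> ?L ! i \<le> ?L ! j}"
    then have i: "i < length ?L" "?L ! i \<le> ?L ! j" by auto
    show "i \<in> {0..j}"
    proof (rule ccontr)
      assume "i \<notin> {0..j}"
      then have "j < i" by simp
      then have "?L ! j < ?L ! i" using sorted_wrt_nth_less[OF L(3)] i(1) by blast
      then show False using i(2) by simp
    qed
  next
    fix i assume "i \<in> {0..j}"
    then have i: "i \<le> j" by simp
    then have "i < length ?L" using j(1) by simp
    moreover have "?L ! i \<le> ?L ! j"
    proof (cases "i = j")
      case False
      then have "i < j" using i by simp
      then show ?thesis using sorted_wrt_nth_less[OF L(3)] j(1) by fastforce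
    qed simp
    ultimately show "i \<in> {i. i < length ?L \<and> ?L ! i \<le> ?L ! j}" by simp
  qed
  also have "card {0..j} = Suc j" by simp
  finally show ?thesis using j(2) by simp
qed

lemma map_sl_st: assumes "distinct xs" shows "map (\<lambda>i. sorted_list_of_set (set xs) ! (i - 1)) (st xs) = xs"
proof -
  have "map (\<lambda>i. sorted_list_of_set (set xs) ! (i - 1)) (st xs) = map (\<lambda>e. sorted_list_of_set (set xs) ! (rk (set xs) e - 1)) xs"
    unfolding st_def by simp
  also have "\<dots> = xs" by (rule map_idI) (use sl_nth_rank[of "set xs"] in simp)
  finally show ?thesis .
qed

lemma phi_decomp:
  assumes d: "distinct (xs @ ys)" and s: "set (xs @ ys) = {1..N}"
  shows "phi N (set xs) (st xs) (st ys) = xs @ ys"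
proof -
  have "{1..N} - set xs = set ys" using d s by auto
  then show ?thesis unfolding phi_def Let_def using map_sl_st d by simp
qed

lemma peel:
  assumes ins: "insertional \<Theta>" and refl: "\<And>p u. u \<in> Sn p \<Longrightarrow> (u,u) \<in> \<Theta> p"
    and d: "distinct (X @ zs @ Y)" and s: "set (X @ zs @ Y) = {1..N}"
    and zs': "distinct zs'" "set zs' = set zs"
    and th: "(st zs, st zs') \<in> \<Theta> (length zs)"
  shows "(X @ zs @ Y, X @ zs' @ Y) \<in> \<Theta> N"
proof -
  let ?ys = "zs @ Y" and ?ys' = "zs' @ Y"
  have dys: "distinct ?ys" using d by simp
  have dys': "distinct ?ys'" using d zs' by auto
  have sys: "set ?ys' = set ?ys" using zs' by auto
  have lz: "length zs' = length zs" using distinct_card[OF zs'(1)] distinct_card[of zs] d zs'(2) by simp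
  let ?r = "rk (set ?ys)"
  have fin: "finite (set ?ys)" by simp
  have sm: "smono (set zs) ?r" unfolding smono_def using rk_mono[OF fin] by auto
  have sm': "smono (set zs') ?r" using sm zs'(2) by simp
  have st1: "st ?ys = map ?r zs @ map ?r Y" unfolding st_def by simp
  have st2: "st ?ys' = map ?r zs' @ map ?r Y" unfolding st_def using sys by simp
  let ?L = "length ?ys"
  have Sy: "st ?ys \<in> Sn ?L" using st_Sn[OF dys] .
  have Sy': "st ?ys' \<in> Sn ?L" using st_Sn[OF dys'] sys lz by simp
  have ph1: "phi ?L (set (map ?r zs)) (st (map ?r zs)) (st (map ?r Y)) = st ?ys"
    using phi_decomp[of "map ?r zs" "map ?r Y" ?L] Sy st1 by (simp add: Sn_def)
  have ph2: "phi ?L (set (map ?r zs')) (st (map ?r zs')) (st (map ?r Y)) = st ?ys'"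
    using phi_decomp[of "map ?r zs'" "map ?r Y" ?L] Sy' st2 by (simp add: Sn_def)
  have Qeq: "set (map ?r zs') = set (map ?r zs)" using zs'(2) by simp
  have e1: "st (map ?r zs) = st zs" using st_map_mono[OF _ sm] d by simp
  have e2: "st (map ?r zs') = st zs'" using st_map_mono[OF zs'(1) sm'] .
  have Qsub: "set (map ?r zs) \<subseteq> {1..length zs + length Y}" using Sy st1 by (auto simp: Sn_def)
  have dA: "distinct (map ?r zs)" using Sy st1 by (simp add: Sn_def)
  have cQ: "card (set (map ?r zs)) = length zs" using distinct_card[OF dA] by simp
  have dB: "distinct (map ?r Y)" using Sy st1 by (simp add: Sn_def)
  have uS: "st zs \<in> Sn (length zs)" using st_Sn d by simp
  have uS': "st zs' \<in> Sn (length zs)" using st_Sn[OF zs'(1)] lz by simp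
  have vS: "st (map ?r Y) \<in> Sn (length Y)" using st_Sn[OF dB] by simp
  have "(phi (length zs + length Y) (set (map ?r zs)) (st zs) (st (map ?r Y)),
         phi (length zs + length Y) (set (map ?r zs)) (st zs') (st (map ?r Y))) \<in> \<Theta> (length zs + length Y)"
    using ins Qsub cQ uS uS' vS th refl[OF vS] unfolding insertional_def by blast
  then have A: "(st ?ys, st ?ys') \<in> \<Theta> ?L" using ph1 ph2 e1 e2 Qeq by simp
  have dX: "distinct (X @ ?ys)" using d by simp
  have dX': "distinct (X @ ?ys')" using d zs' by auto
  have sX: "set (X @ ?ys) = {1..N}" using s by simp
  have sX': "set (X @ ?ys') = {1..N}" using s zs' by auto
  have N: "N = length X + ?L" using distinct_card[OF dX] sX by simp
  have p1: "phi N (set X) (st X) (st ?ys) = X @ ?ys" using phi_decomp[OF dX sX] .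
  have p2: "phi N (set X) (st X) (st ?ys') = X @ ?ys'" using phi_decomp[OF dX' sX'] .
  have XS: "st X \<in> Sn (length X)" using st_Sn d by simp
  have cX: "card (set X) = length X" using distinct_card[of X] d by simp
  have XQ: "set X \<subseteq> {1..length X + ?L}" using sX N by auto
  have "(phi (length X + ?L) (set X) (st X) (st ?ys), phi (length X + ?L) (set X) (st X) (st ?ys')) \<in> \<Theta> (length X + ?L)"
    using ins XQ cX XS Sy Sy' refl[OF XS] A unfolding insertional_def by blast
  then show ?thesis using p1 p2 N by simp
qed


fun inv_list :: "nat list \<Rightarrow> (nat \<times> nat) list" where
  "inv_list [] = []"
| "inv_list (x # xs) = map (\<lambda>y. (y, x)) (filter (\<lambda>y. y < x) xs) @ inv_list xs"

lemma invs_list: "invs w = set (inv_list w)"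
proof (induction w)
  case Nil then show ?case by (auto simp: mem_invs)
next
  case (Cons x xs)
  show ?case
  proof (intro set_eqI)
    fix y :: "nat \<times> nat"
    obtain a b where y: "y = (a,b)" by (cases y)
    have "y \<in> invs (x # xs) \<longleftrightarrow> (b = x \<and> a \<in> set xs \<and> a < x) \<or> y \<in> invs xs"
      using y by (auto simp: mem_invs)
    then show "y \<in> invs (x # xs) \<longleftrightarrow> y \<in> set (inv_list (x # xs))" using Cons y by auto
  qed
qed

lemma lower_star_eq:
  assumes g: "\<gamma> \<in> Sn m" and w: "w \<in> Sn m" and I: "invs \<gamma> = insert pr (invs w)" "pr \<notin> invs w"
    and H: "\<And>w'. w' \<in> Sn m \<Longrightarrow> invs w' \<subset> invs \<gamma> \<Longrightarrow> pr \<notin> invs w'"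
  shows "lower_star \<gamma> = w"
proof -
  have lg: "length \<gamma> = m" using Sn_length[OF g] .
  have nz: "\<not> (\<exists>z\<in>Sn m. weak_lt w z \<and> weak_lt z \<gamma>)"
  proof
    assume "\<exists>z\<in>Sn m. weak_lt w z \<and> weak_lt z \<gamma>"
    then obtain z where z: "invs w \<subset> invs z" "invs z \<subset> invs \<gamma>" unfolding weak_lt_def by blast
    then obtain y where y: "y \<in> invs z" "y \<notin> invs w" by blast
    then have "y = pr" using z(2) I by blast
    then have "pr \<in> invs z" using y by simp
    then have "invs \<gamma> \<subseteq> invs z" using z(1) I by auto
    then show False using z(2) by auto
  qed
  have P: "w \<in> Sn (length \<gamma>) \<and> weak_lt w \<gamma> \<and> \<not> (\<exists>z\<in>Sn (length \<gamma>). weak_lt w z \<and> weak_lt z \<gamma>)"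
    using w I nz lg unfolding weak_lt_def by auto
  show ?thesis
    unfolding lower_star_def
  proof (rule the_equality)
    show "w \<in> Sn (length \<gamma>) \<and> weak_lt w \<gamma> \<and> \<not> (\<exists>z\<in>Sn (length \<gamma>). weak_lt w z \<and> weak_lt z \<gamma>)" by (fact P)
    fix w' assume P': "w' \<in> Sn (length \<gamma>) \<and> weak_lt w' \<gamma> \<and> \<not> (\<exists>z\<in>Sn (length \<gamma>). weak_lt w' z \<and> weak_lt z \<gamma>)"
    then have w': "w' \<in> Sn m" "invs w' \<subset> invs \<gamma>" using lg unfolding weak_lt_def by auto
    then have "pr \<notin> invs w'" using H by blast
    then have sub: "invs w' \<subseteq> invs w" using w'(2) I by auto
    have "invs w' = invs w"
    proof (rule ccontr)
      assume "invs w' \<noteq> invs w"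
      then have "weak_lt w' w" using sub unfolding weak_lt_def by blast
      moreover have "weak_lt w \<gamma>" using P by blast
      ultimately show False using P' w lg by blast
    qed
    then show "w' = w" using invs_inj[OF w'(1) w] by blast
  qed
qed

lemma atLeastAtMost_3: "{1..3::nat} = {1,2,3}" by auto
lemma atLeastAtMost_4: "{1..4::nat} = {1,2,3,4}" by auto

lemma coclosed_inst: "w \<in> Sn n \<Longrightarrow> (a,c) \<in> invs w \<Longrightarrow> a < b \<Longrightarrow> b < c \<Longrightarrow> (a,b) \<in> invs w \<or> (b,c) \<in> invs w"
  using invs_coclosed unfolding coclosedI_def by blast

lemma ls_231: "lower_star [2,3,1] = [2,1,3]"
proof (rule lower_star_eq[where m = 3 and pr = "(1,3)"])
  show "[2,3,1] \<in> Sn 3" "[2,1,3] \<in> Sn 3" by (auto simp: Sn_def atLeastAtMost_3)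
  show "invs [2,3,1] = insert (1,3) (invs [2,1,3])" "(1,3) \<notin> invs [2,1,3]" by (auto simp: invs_list)
  fix w' assume w': "w' \<in> Sn 3" "invs w' \<subset> invs [2,3,1]"
  show "(1,3) \<notin> invs w'"
  proof
    assume "(1,3) \<in> invs w'"
    then have "(1,2) \<in> invs w' \<or> (2,3) \<in> invs w'" using coclosed_inst[OF w'(1), of 1 3 2] by simp
    then show False using w'(2) \<open>(1,3) \<in> invs w'\<close> by (auto simp: invs_list)
  qed
qed

lemma ls_312: "lower_star [3,1,2] = [1,3,2]"
proof (rule lower_star_eq[where m = 3 and pr = "(1,3)"])
  show "[3,1,2] \<in> Sn 3" "[1,3,2] \<in> Sn 3" by (auto simp: Sn_def atLeastAtMost_3)
  show "invs [3,1,2] = insert (1,3) (invs [1,3,2])" "(1,3) \<notin> invs [1,3,2]" by (auto simp: invs_list)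
  fix w' assume w': "w' \<in> Sn 3" "invs w' \<subset> invs [3,1,2]"
  show "(1,3) \<notin> invs w'"
  proof
    assume "(1,3) \<in> invs w'"
    then have "(1,2) \<in> invs w' \<or> (2,3) \<in> invs w'" using coclosed_inst[OF w'(1), of 1 3 2] by simp
    then show False using w'(2) \<open>(1,3) \<in> invs w'\<close> by (auto simp: invs_list)
  qed
qed

lemma ls_3412: "lower_star [3,4,1,2] = [3,1,4,2]"
proof (rule lower_star_eq[where m = 4 and pr = "(1,4)"])
  show "[3,4,1,2] \<in> Sn 4" "[3,1,4,2] \<in> Sn 4" by (auto simp: Sn_def atLeastAtMost_4)
  show "invs [3,4,1,2] = insert (1,4) (invs [3,1,4,2])" "(1,4) \<notin> invs [3,1,4,2]" by (auto simp: invs_list)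
  fix w' assume w': "w' \<in> Sn 4" "invs w' \<subset> invs [3,4,1,2]"
  show "(1,4) \<notin> invs w'"
  proof
    assume a: "(1,4) \<in> invs w'"
    have sub: "invs w' \<subseteq> {(1,3),(1,4),(2,3),(2,4)}" using w'(2) by (auto simp: invs_list)
    have "(1,2) \<in> invs w' \<or> (2,4) \<in> invs w'" using coclosed_inst[OF w'(1) a, of 2] by simp
    then have "(2,4) \<in> invs w'" using sub by auto
    have "(1,3) \<in> invs w' \<or> (3,4) \<in> invs w'" using coclosed_inst[OF w'(1) a, of 3] by simp
    then have "(1,3) \<in> invs w'" using sub by auto
    have "(2,3) \<in> invs w' \<or> (3,4) \<in> invs w'" using coclosed_inst[OF w'(1) \<open>(2,4) \<in> invs w'\<close>, of 3] by simp
    then have "(2,3) \<in> invs w'" using sub by auto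
    have "invs [3,4,1,2] \<subseteq> invs w'" using a \<open>(2,4) \<in> invs w'\<close> \<open>(1,3) \<in> invs w'\<close> \<open>(2,3) \<in> invs w'\<close>
      by (auto simp: invs_list)
    then show False using w'(2) by blast
  qed
qed

lemma ls_2413: "lower_star [2,4,1,3] = [2,1,4,3]"
proof (rule lower_star_eq[where m = 4 and pr = "(1,4)"])
  show "[2,4,1,3] \<in> Sn 4" "[2,1,4,3] \<in> Sn 4" by (auto simp: Sn_def atLeastAtMost_4)
  show "invs [2,4,1,3] = insert (1,4) (invs [2,1,4,3])" "(1,4) \<notin> invs [2,1,4,3]" by (auto simp: invs_list)
  fix w' assume w': "w' \<in> Sn 4" "invs w' \<subset> invs [2,4,1,3]"
  show "(1,4) \<notin> invs w'"
  proof
    assume a: "(1,4) \<in> invs w'"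
    have sub: "invs w' \<subseteq> {(1,2),(1,4),(3,4)}" using w'(2) by (auto simp: invs_list)
    have "(1,2) \<in> invs w' \<or> (2,4) \<in> invs w'" using coclosed_inst[OF w'(1) a, of 2] by simp
    then have "(1,2) \<in> invs w'" using sub by auto
    have "(1,3) \<in> invs w' \<or> (3,4) \<in> invs w'" using coclosed_inst[OF w'(1) a, of 3] by simp
    then have "(3,4) \<in> invs w'" using sub by auto
    have "invs [2,4,1,3] \<subseteq> invs w'" using a \<open>(1,2) \<in> invs w'\<close> \<open>(3,4) \<in> invs w'\<close>
      by (auto simp: invs_list)
    then show False using w'(2) by blast
  qed
qed

lemma H_refl: "H_family \<Theta> \<Longrightarrow> u \<in> Sn p \<Longrightarrow> (u,u) \<in> \<Theta> p"
  unfolding H_family_def lattice_congruence_def equiv_def refl_on_def by blast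

lemma H_ins: "H_family \<Theta> \<Longrightarrow> insertional \<Theta>"
  unfolding H_family_def by blast

lemma st_341: "st [3,4,1] = [2,3,1]"
  by (rule st_eq) (auto simp: Sn_def atLeastAtMost_3 ord_iso_def)
lemma st_314: "st [3,1,4] = [2,1,3]"
  by (rule st_eq) (auto simp: Sn_def atLeastAtMost_3 ord_iso_def)
lemma st_241: "st [2,4,1] = [2,3,1]"
  by (rule st_eq) (auto simp: Sn_def atLeastAtMost_3 ord_iso_def)
lemma st_214: "st [2,1,4] = [2,1,3]"
  by (rule st_eq) (auto simp: Sn_def atLeastAtMost_3 ord_iso_def)
lemma st_412: "st [4,1,2] = [3,1,2]"
  by (rule st_eq) (auto simp: Sn_def atLeastAtMost_3 ord_iso_def)
lemma st_142: "st [1,4,2] = [1,3,2]"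
  by (rule st_eq) (auto simp: Sn_def atLeastAtMost_3 ord_iso_def)
lemma st_413: "st [4,1,3] = [3,1,2]"
  by (rule st_eq) (auto simp: Sn_def atLeastAtMost_3 ord_iso_def)
lemma st_143: "st [1,4,3] = [1,3,2]"
  by (rule st_eq) (auto simp: Sn_def atLeastAtMost_3 ord_iso_def)

lemma contracts_231_imp:
  assumes H: "H_family \<Theta>" and c: "contracts \<Theta> [2,3,1]"
  shows "contracts \<Theta> [3,4,1,2]" and "contracts \<Theta> [2,4,1,3]"
proof -
  have c3: "([2,3,1],[2,1,3]) \<in> \<Theta> 3" using c ls_231 unfolding contracts_def by (simp add: eval_nat_numeral)
  have "([] @ [3,4,1] @ [2], [] @ [3,1,4] @ [2]) \<in> \<Theta> 4"
    proof -
    have l: "length [3,4,1::nat] = (3::nat)" by simp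
    have th: "(st [3,4,1::nat], st [3,1,4]) \<in> \<Theta> (length [3,4,1::nat])" unfolding st_341 st_314 l by (rule c3)
    show ?thesis by (rule peel[OF H_ins[OF H] H_refl[OF H] _ _ _ _ th]) (auto simp: atLeastAtMost_4)
  qed
  then show "contracts \<Theta> [3,4,1,2]" unfolding contracts_def using ls_3412 by (simp add: eval_nat_numeral)
  have "([] @ [2,4,1] @ [3], [] @ [2,1,4] @ [3]) \<in> \<Theta> 4"
    proof -
    have l: "length [2,4,1::nat] = (3::nat)" by simp
    have th: "(st [2,4,1::nat], st [2,1,4]) \<in> \<Theta> (length [2,4,1::nat])" unfolding st_241 st_214 l by (rule c3)
    show ?thesis by (rule peel[OF H_ins[OF H] H_refl[OF H] _ _ _ _ th]) (auto simp: atLeastAtMost_4)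
  qed
  then show "contracts \<Theta> [2,4,1,3]" unfolding contracts_def using ls_2413 by (simp add: eval_nat_numeral)
qed

lemma contracts_312_imp:
  assumes H: "H_family \<Theta>" and c: "contracts \<Theta> [3,1,2]"
  shows "contracts \<Theta> [3,4,1,2]" and "contracts \<Theta> [2,4,1,3]"
proof -
  have c3: "([3,1,2],[1,3,2]) \<in> \<Theta> 3" using c ls_312 unfolding contracts_def by (simp add: eval_nat_numeral)
  have "([3] @ [4,1,2] @ [], [3] @ [1,4,2] @ []) \<in> \<Theta> 4"
    proof -
    have l: "length [4,1,2::nat] = (3::nat)" by simp
    have th: "(st [4,1,2::nat], st [1,4,2]) \<in> \<Theta> (length [4,1,2::nat])" unfolding st_412 st_142 l by (rule c3)
    show ?thesis by (rule peel[OF H_ins[OF H] H_refl[OF H] _ _ _ _ th]) (auto simp: atLeastAtMost_4)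
  qed
  then show "contracts \<Theta> [3,4,1,2]" unfolding contracts_def using ls_3412 by (simp add: eval_nat_numeral)
  have "([2] @ [4,1,3] @ [], [2] @ [1,4,3] @ []) \<in> \<Theta> 4"
    proof -
    have l: "length [4,1,3::nat] = (3::nat)" by simp
    have th: "(st [4,1,3::nat], st [1,4,3]) \<in> \<Theta> (length [4,1,3::nat])" unfolding st_413 st_143 l by (rule c3)
    show ?thesis by (rule peel[OF H_ins[OF H] H_refl[OF H] _ _ _ _ th]) (auto simp: atLeastAtMost_4)
  qed
  then show "contracts \<Theta> [2,4,1,3]" unfolding contracts_def using ls_2413 by (simp add: eval_nat_numeral)
qed

lemma Syl_contracts: "contracts Syl [2,3,1]"
proof -
  have "D (invs ([2] @ [3,1] @ [])) = D (invs ([2] @ [1,3] @ []))"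
    by (rule swap_D[of _ "[2]" 3 1 "[]" 2]) auto
  then show ?thesis unfolding contracts_def ls_231 Syl_def by (auto simp: Sn_def atLeastAtMost_3)
qed

lemma ASyl_contracts: "contracts ASyl [3,1,2]"
proof -
  have "D' (invs ([] @ [3,1] @ [2])) = D' (invs ([] @ [1,3] @ [2]))"
    by (rule swap_D'[of _ "[]" 3 1 "[2]" 2]) auto
  then show ?thesis unfolding contracts_def ls_312 ASyl_def by (auto simp: Sn_def atLeastAtMost_3)
qed


section \<open>Baxter swaps are contracted\<close>

lemma sl_max_split:
  assumes "finite A" "A \<noteq> {}"
  shows "sorted_list_of_set A = sorted_list_of_set (A - {Max A}) @ [Max A]"
proof -
  let ?l = "sorted_list_of_set (A - {Max A}) @ [Max A]"
  have M: "Max A \<in> A" using Max_in assms by blast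
  have lt: "\<forall>x\<in>A - {Max A}. x < Max A"
  proof
    fix x assume "x \<in> A - {Max A}"
    then have "x \<le> Max A" "x \<noteq> Max A" using Max_ge[OF assms(1)] by auto
    then show "x < Max A" by simp
  qed
  have "sorted_wrt (<) ?l" using lt assms(1) by (simp add: sorted_wrt_append)
  moreover have "set ?l = A" using M assms(1) by auto
  moreover have "length ?l = card A"
  proof -
    have "card A > 0" using assms card_gt_0_iff by blast
    then show ?thesis using card_Diff_singleton[OF M] assms(1) by simp
  qed
  ultimately show ?thesis using sorted_list_of_set_unique[OF assms(1)] by blast
qed

lemma ji_invs:
  assumes sX: "sorted_wrt (<) Xs" and sY: "sorted_wrt (<) Ys"
    and bX: "\<forall>x\<in>set Xs. x < c" and bY: "\<forall>y\<in>set Ys. a < y" and ac: "a < c"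
    and d: "distinct (Xs @ [c,a] @ Ys)"
  shows "invs (Xs @ [c,a] @ Ys) = {(p1,q1). p1 < q1 \<and> (q1 = c \<or> q1 \<in> set Xs) \<and> (p1 = a \<or> p1 \<in> set Ys)}"
proof (intro set_eqI)
  fix y :: "nat \<times> nat"
  obtain p1 q1 where y: "y = (p1,q1)" by (cases y)
  have "bef (Xs @ [c,a] @ Ys) q1 p1 \<longleftrightarrow> bef Xs q1 p1 \<or> (q1 = c \<and> p1 = a) \<or> bef Ys q1 p1
     \<or> (q1 \<in> {c,a} \<and> p1 \<in> set Ys) \<or> (q1 \<in> set Xs \<and> p1 \<in> {c,a} \<union> set Ys)"
    by (auto simp: bef_append)
  also have "\<dots> \<longleftrightarrow> (q1 \<in> set Xs \<and> p1 \<in> set Xs \<and> q1 < p1) \<or> (q1 = c \<and> p1 = a) \<or> (q1 \<in> set Ys \<and> p1 \<in> set Ys \<and> q1 < p1)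
     \<or> (q1 \<in> {c,a} \<and> p1 \<in> set Ys) \<or> (q1 \<in> set Xs \<and> p1 \<in> {c,a} \<union> set Ys)"
    using bef_sorted[OF sX] bef_sorted[OF sY] by simp
  finally have e: "bef (Xs @ [c,a] @ Ys) q1 p1 \<longleftrightarrow> \<dots>" .
  show "y \<in> invs (Xs @ [c,a] @ Ys) \<longleftrightarrow> y \<in> {(p1,q1). p1 < q1 \<and> (q1 = c \<or> q1 \<in> set Xs) \<and> (p1 = a \<or> p1 \<in> set Ys)}"
    unfolding y mem_invs e using bX bY ac by auto
qed

lemma baxter_swap:
  assumes H: "H_family \<Theta>" and c1: "contracts \<Theta> [3,4,1,2]" and c2: "contracts \<Theta> [2,4,1,3]"
    and x: "T @ [c,a] @ U \<in> Sn n" and ac: "a < c"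
    and b: "b \<in> set T" "a < b" "b < c" and b': "b' \<in> set U" "a < b'" "b' < c"
  shows "(T @ [c,a] @ U, T @ [a,c] @ U) \<in> \<Theta> n"
proof -
  let ?x = "T @ [c,a] @ U" and ?x' = "T @ [a,c] @ U"
  have dx: "distinct ?x" using Sn_distinct[OF x] .
  have sx: "set ?x = {1..n}" using Sn_set[OF x] .
  have x': "?x' \<in> Sn n" using dx sx by (auto simp: Sn_def)
  define P where "P = set T"
  define S where "S = set U"
  have PS: "P \<inter> S = {}" "c \<notin> P" "a \<notin> P" "c \<notin> S" "a \<notin> S" "a \<noteq> c"
    using dx unfolding P_def S_def by auto
  define A where "A = {d \<in> P. d < c} \<union> {d \<in> S. d < a}"
  define B where "B = {d \<in> P. c < d} \<union> {d \<in> S. a < d}"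
  have fA: "finite A" and fB: "finite B" unfolding A_def B_def P_def S_def by auto
  have bA: "b \<in> A" using b unfolding A_def P_def by auto
  have bB: "b' \<in> B" using b' unfolding B_def S_def by auto
  define l where "l = Max A"
  define r where "r = Min B"
  have lA: "l \<in> A" "b \<le> l" using fA bA Max_in Max_ge unfolding l_def by blast+
  have rB: "r \<in> B" "r \<le> b'" using fB bB Min_in Min_le unfolding r_def by blast+
  have hl: "l \<in> P" "a < l" "l < c" using lA b unfolding A_def by auto
  have hr: "r \<in> S" "a < r" "r < c" using rB b' unfolding B_def by auto
  have lr: "l \<noteq> r" using hl hr PS by blast
  define Xs where "Xs = sorted_list_of_set A"
  define Ys where "Ys = sorted_list_of_set B"
  define X where "X = sorted_list_of_set (A - {l})"
  define Y where "Y = sorted_list_of_set (B - {r})"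
  have Xs: "Xs = X @ [l]" unfolding Xs_def X_def l_def using sl_max_split fA bA by blast
  have Ys: "Ys = r # Y" unfolding Ys_def Y_def r_def using sorted_list_of_set_nonempty fB bB by blast
  have sXs: "sorted_wrt (<) Xs" "set Xs = A" "distinct Xs" unfolding Xs_def using fA by auto
  have sYs: "sorted_wrt (<) Ys" "set Ys = B" "distinct Ys" unfolding Ys_def using fB by auto
  have AB: "A \<inter> B = {}" "a \<notin> A" "c \<notin> A" "a \<notin> B" "c \<notin> B" unfolding A_def B_def using PS by auto
  have setx: "set ?x = P \<union> S \<union> {a,c}" unfolding P_def S_def by auto
  have cover: "P \<union> S \<union> {a,c} = A \<union> B \<union> {a,c}" unfolding A_def B_def using PS by auto
  let ?j = "Xs @ [c,a] @ Ys" and ?j' = "Xs @ [a,c] @ Ys"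
  have dj: "distinct ?j" using sXs sYs AB PS by auto
  have dj': "distinct ?j'" using sXs sYs AB PS by auto
  have setj: "set ?j = {1..n}" using sXs sYs setx cover sx by auto
  have "set ?j' = set ?j" by auto
  then have setj': "set ?j' = {1..n}" using setj by simp
  have jS: "?j \<in> Sn n" "?j' \<in> Sn n" using dj dj' setj setj' by (auto simp: Sn_def)
  have bXs: "\<forall>y\<in>set Xs. y < c"
  proof
    fix y assume "y \<in> set Xs"
    then have "y \<in> A" using sXs(2) by simp
    then show "y < c" using ac unfolding A_def by auto
  qed
  have bYs: "\<forall>y\<in>set Ys. a < y"
  proof
    fix y assume "y \<in> set Ys"
    then have "y \<in> B" using sYs(2) by simp
    then show "a < y" using ac unfolding B_def by auto
  qed
  have ij: "invs ?j = {(p1,q1). p1 < q1 \<and> (q1 = c \<or> q1 \<in> A) \<and> (p1 = a \<or> p1 \<in> B)}"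
  proof -
    have "invs ?j = {(p1,q1). p1 < q1 \<and> (q1 = c \<or> q1 \<in> set Xs) \<and> (p1 = a \<or> p1 \<in> set Ys)}"
      by (rule ji_invs[OF sXs(1) sYs(1) bXs bYs ac dj])
    then show ?thesis unfolding sXs(2) sYs(2) .
  qed
  have jx: "invs ?j \<subseteq> invs ?x"
  proof
    fix y assume y: "y \<in> invs ?j"
    obtain p1 q1 where yy: "y = (p1,q1)" by (cases y)
    have pq: "p1 < q1" "q1 = c \<or> q1 \<in> A" "p1 = a \<or> p1 \<in> B" using y yy ij by auto
    have "bef ?x q1 p1"
    proof -
      consider "q1 = c" | "q1 \<in> P" "q1 < c" | "q1 \<in> S" "q1 < a" using pq(2) unfolding A_def by auto
      then show ?thesis
      proof cases
        case 1
        then consider "p1 = a" | "p1 \<in> S" using pq(1,3) unfolding B_def by auto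
        then show ?thesis using 1 unfolding S_def by cases (auto simp: bef_append)
      next
        case 2
        then consider "p1 = a" | "p1 \<in> S" using pq(1,3) unfolding B_def by auto
        then show ?thesis using 2 unfolding S_def P_def by cases (auto simp: bef_append)
      next
        case 3
        then have False using pq(1,3) ac unfolding B_def by auto
        then show ?thesis ..
      qed
    qed
    then show "y \<in> invs ?x" using yy pq(1) by (simp add: mem_invs)
  qed
  have sj: "invs ?j = insert (a,c) (invs ?j')" "(a,c) \<notin> invs ?j'" using swap_invs[OF dj ac] by auto
  have sx': "invs ?x = insert (a,c) (invs ?x')" "(a,c) \<notin> invs ?x'" using swap_invs[OF dx ac] by auto
  have jx': "invs ?j' \<subseteq> invs ?x'" using jx sj sx' by auto
  have jdec: "?j = X @ [l,c,a,r] @ Y" "?j' = X @ [l,a,c,r] @ Y" using Xs Ys by auto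
  have th: "(st [l,c,a,r], st [l,a,c,r]) \<in> \<Theta> (length [l,c,a,r])"
  proof (cases "r < l")
    case True
    have "st [l,c,a,r] = [3,4,1,2]"
      by (rule st_eq) (use True hl hr in \<open>auto simp: Sn_def atLeastAtMost_4 ord_iso_def\<close>)
    moreover have "st [l,a,c,r] = [3,1,4,2]"
      by (rule st_eq) (use True hl hr in \<open>auto simp: Sn_def atLeastAtMost_4 ord_iso_def\<close>)
    moreover have "([3,4,1,2],[3,1,4,2]) \<in> \<Theta> 4" using c1 ls_3412 unfolding contracts_def by (simp add: eval_nat_numeral)
    ultimately show ?thesis by (simp add: eval_nat_numeral)
  next
    case False
    then have "l < r" using lr by simp
    have "st [l,c,a,r] = [2,4,1,3]"
      by (rule st_eq) (use \<open>l < r\<close> hl hr in \<open>auto simp: Sn_def atLeastAtMost_4 ord_iso_def\<close>)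
    moreover have "st [l,a,c,r] = [2,1,4,3]"
      by (rule st_eq) (use \<open>l < r\<close> hl hr in \<open>auto simp: Sn_def atLeastAtMost_4 ord_iso_def\<close>)
    moreover have "([2,4,1,3],[2,1,4,3]) \<in> \<Theta> 4" using c2 ls_2413 unfolding contracts_def by (simp add: eval_nat_numeral)
    ultimately show ?thesis by (simp add: eval_nat_numeral)
  qed
  from dj have d1: "distinct (X @ [l,c,a,r] @ Y)" unfolding jdec(1) .
  from setj have s1: "set (X @ [l,c,a,r] @ Y) = {1..n}" unfolding jdec(1) .
  have d2: "distinct [l,a,c,r]" using d1 by auto
  have s2: "set [l,a,c,r] = set [l,c,a,r]" by auto
  have jj: "(?j, ?j') \<in> \<Theta> n"
    unfolding jdec using peel[OF H_ins[OF H] H_refl[OF H] d1 s1 d2 s2 th] .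
  have lc: "lattice_congruence n (\<Theta> n)" using H unfolding H_family_def by blast
  have "(wjoin n ?j ?x', wjoin n ?j' ?x') \<in> \<Theta> n" using lc jj x' unfolding lattice_congruence_def by blast
  moreover have "wjoin n ?j ?x' = ?x"
  proof (rule wjoin_eq)
    show "is_wjoin n ?j ?x' ?x"
      unfolding is_wjoin_def weak_le_def using x jx sx' sj by auto
  qed
  moreover have "wjoin n ?j' ?x' = ?x'"
  proof (rule wjoin_eq)
    show "is_wjoin n ?j' ?x' ?x'"
      unfolding is_wjoin_def weak_le_def using x' jx' by auto
  qed
  ultimately show ?thesis by simp
qed


section \<open>Reduced permutations\<close>

definition bdesc :: "nat list \<Rightarrow> bool" where
  "bdesc x \<longleftrightarrow> (\<exists>T c a U. x = T @ [c,a] @ U \<and> a < c \<and> (\<exists>b\<in>set T. a < b \<and> b < c) \<and> (\<exists>b\<in>set U. a < b \<and> b < c))"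

lemma walk:
  fixes a c c0 :: nat
  shows "(\<forall>e\<in>set M. e \<le> a \<or> c \<le> e) \<Longrightarrow> c \<le> c0 \<Longrightarrow> a < c \<Longrightarrow>
    \<exists>T' c' a' U'. c0 # M @ [a] = T' @ [c',a'] @ U' \<and> c \<le> c' \<and> a' \<le> a"
proof (induction M arbitrary: c0)
  case Nil
  then have "c0 # [] @ [a] = [] @ [c0,a] @ [] \<and> c \<le> c0 \<and> a \<le> a" by simp
  then show ?case by blast
next
  case (Cons e M)
  show ?case
  proof (cases "c \<le> e")
    case True
    then obtain T' c' a' U' where h: "e # M @ [a] = T' @ [c',a'] @ U'" "c \<le> c'" "a' \<le> a"
      using Cons.IH[of e] Cons.prems by auto
    then have "c0 # (e # M) @ [a] = (c0 # T') @ [c',a'] @ U' \<and> c \<le> c' \<and> a' \<le> a" by simp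
    then show ?thesis by blast
  next
    case False
    then have "e \<le> a" using Cons.prems(1) by auto
    then have "c0 # (e # M) @ [a] = [] @ [c0,e] @ (M @ [a]) \<and> c \<le> c0 \<and> e \<le> a" using Cons.prems by simp
    then show ?thesis by blast
  qed
qed

lemma bef_before_elem: "distinct (T @ c # R) \<Longrightarrow> bef (T @ c # R) b c \<Longrightarrow> b \<in> set T"
  by (auto simp: bef_append dest: bef_set)

lemma bef_after_elem: "distinct (L @ a # U) \<Longrightarrow> bef (L @ a # U) a b \<Longrightarrow> b \<in> set U"
  by (auto simp: bef_append dest: bef_set)

lemma reduced_invs:
  assumes x: "x \<in> Sn n" and nb: "\<not> bdesc x"
  shows "invs x = (D (invs x) \<union> D' (invs x))\<^sup>+"
proof
  have tr: "trans (invs x)" using invs_closed[OF Sn_distinct[OF x]] closedI_trans by blast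
  show "(D (invs x) \<union> D' (invs x))\<^sup>+ \<subseteq> invs x"
    by (rule trancl_sub_trans[OF _ tr]) (use D_sub D'_sub in blast)
  let ?R = "D (invs x) \<union> D' (invs x)"
  have d: "distinct x" using Sn_distinct[OF x] .
  have main: "c - a = k \<Longrightarrow> (a,c) \<in> invs x \<Longrightarrow> (a,c) \<in> ?R\<^sup>+" for k a c
  proof (induction k arbitrary: a c rule: less_induct)
    case (less k)
    have ac: "a < c" "bef x c a" using less.prems(2) by (auto simp: mem_invs)
    have inx: "a \<in> set x" "c \<in> set x" using ac bef_set by blast+
    show ?case
    proof (cases "(a,c) \<in> ?R")
      case True then show ?thesis by blast
    next
      case False
      then have nD: "(a,c) \<notin> D (invs x)" and nD': "(a,c) \<notin> D' (invs x)" by auto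
      obtain b where b: "a \<le> b" "b < c" "(b,c) \<notin> invs x" using nD ac unfolding D_def by auto
      have "b \<noteq> a" using b less.prems(2) by auto
      then have b1: "a < b" using b by simp
      have binx: "b \<in> set x" using inx b1 b(2) Sn_set[OF x] by auto
      have "bef x b c" using b(3) b(2) bef_total[OF binx inx(2)] by (auto simp: mem_invs)
      obtain b' where b': "a < b'" "b' \<le> c" "(a,b') \<notin> invs x" using nD' ac unfolding D'_def by auto
      have "b' \<noteq> c" using b' less.prems(2) by auto
      then have b2: "b' < c" using b' by simp
      have b'inx: "b' \<in> set x" using inx b'(1) b2 Sn_set[OF x] by auto
      have "bef x a b'" using b'(3) b'(1) bef_total[OF inx(1) b'inx] by (auto simp: mem_invs)
      show ?thesis
      proof (cases "\<exists>e. a < e \<and> e < c \<and> bef x c e \<and> bef x e a")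
        case True
        then obtain e where e: "a < e" "e < c" "bef x c e" "bef x e a" by blast
        have IH: "\<And>a' c'. c' - a' < k \<Longrightarrow> (a',c') \<in> invs x \<Longrightarrow> (a',c') \<in> ?R\<^sup>+" using less.IH by blast
        have "(a,e) \<in> ?R\<^sup>+" using IH[of e a] e less.prems(1) by (simp add: mem_invs)
        moreover have "(e,c) \<in> ?R\<^sup>+" using IH[of c e] e less.prems(1) by (simp add: mem_invs)
        ultimately show ?thesis by (rule trancl_trans)
      next
        case False
        obtain T1 M U1 where xd: "x = T1 @ c # M @ a # U1" using bef_decomp[OF ac(2)] by blast
        have "\<forall>e\<in>set M. e \<le> a \<or> c \<le> e"
        proof
          fix e assume e: "e \<in> set M"
          have "bef x c e" "bef x e a" using e unfolding xd by (auto simp: bef_append)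
          then show "e \<le> a \<or> c \<le> e" using False by auto
        qed
        then obtain T' c' a' U' where w: "c # M @ [a] = T' @ [c',a'] @ U'" "c \<le> c'" "a' \<le> a"
          using walk[of M a c c] ac(1) by blast
        have x2: "x = (T1 @ T') @ [c',a'] @ (U' @ U1)"
        proof -
          have "x = T1 @ (c # M @ [a]) @ U1" using xd by simp
          then show ?thesis using w(1) by simp
        qed
        have "b \<in> set T1" using bef_before_elem[of T1 c "M @ a # U1" b] d xd \<open>bef x b c\<close> by simp
        moreover have "b' \<in> set U1" using bef_after_elem[of "T1 @ c # M" a U1 b'] d xd \<open>bef x a b'\<close> by simp
        ultimately have bb: "b \<in> set (T1 @ T')" "b' \<in> set (U' @ U1)" by auto
        have e1: "\<exists>b\<in>set (T1 @ T'). a' < b \<and> b < c'"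
          using w(2,3) b1 b(2) by (intro bexI[OF _ bb(1)]) auto
        have e2: "\<exists>b\<in>set (U' @ U1). a' < b \<and> b < c'"
          using w(2,3) b'(1) b2 by (intro bexI[OF _ bb(2)]) auto
        have "a' < c'" using w(2,3) ac(1) by simp
        then have "x = (T1 @ T') @ [c',a'] @ (U' @ U1) \<and> a' < c' \<and> (\<exists>b\<in>set (T1 @ T'). a' < b \<and> b < c')
            \<and> (\<exists>b\<in>set (U' @ U1). a' < b \<and> b < c')"
          using x2 e1 e2 by blast
        then have "bdesc x" unfolding bdesc_def by blast
        then show ?thesis using nb by blast
      qed
    qed
  qed
  show "invs x \<subseteq> ?R\<^sup>+"
  proof
    fix y assume "y \<in> invs x"
    then show "y \<in> ?R\<^sup>+" using main by (cases y) blast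
  qed
qed

lemma finite_invs: "x \<in> Sn n \<Longrightarrow> finite (invs x)"
proof -
  assume x: "x \<in> Sn n"
  have "Pairs n \<subseteq> {1..n} \<times> {1..n}" unfolding Pairs_def by auto
  then have "finite (Pairs n)" using finite_subset by blast
  then show ?thesis using invs_Pairs[OF x] finite_subset by blast
qed

lemma reduce:
  assumes H: "H_family \<Theta>" and c1: "contracts \<Theta> [3,4,1,2]" and c2: "contracts \<Theta> [2,4,1,3]"
  shows "x \<in> Sn n \<Longrightarrow> \<exists>y\<in>Sn n. \<not> bdesc y \<and> (x,y) \<in> \<Theta> n \<and> D (invs y) = D (invs x) \<and> D' (invs y) = D' (invs x)"
proof (induction "card (invs x)" arbitrary: x rule: less_induct)
  case less
  have eqv: "equiv (Sn n) (\<Theta> n)" using H unfolding H_family_def lattice_congruence_def by blast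
  show ?case
  proof (cases "bdesc x")
    case False
    have "(x,x) \<in> \<Theta> n" using H_refl[OF H less.prems] .
    then show ?thesis using False less.prems by blast
  next
    case True
    then obtain T c a U b b' where xd: "x = T @ [c,a] @ U" "a < c" and b: "b \<in> set T" "a < b" "b < c"
      and b': "b' \<in> set U" "a < b'" "b' < c" unfolding bdesc_def by blast
    let ?x' = "T @ [a,c] @ U"
    have dx: "distinct (T @ [c,a] @ U)" using Sn_distinct[OF less.prems] xd by simp
    have x': "?x' \<in> Sn n" using less.prems xd by (auto simp: Sn_def)
    have th: "(x, ?x') \<in> \<Theta> n" using baxter_swap[OF H c1 c2 _ xd(2) b b'] less.prems xd by simp
    have Deq: "D (invs x) = D (invs ?x')" using swap_D[OF xd(1) _ xd(2) b] dx xd by simp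
    have D'eq: "D' (invs x) = D' (invs ?x')" using swap_D'[OF xd(1) _ xd(2) b'] dx xd by simp
    have si: "invs x = insert (a,c) (invs ?x')" "(a,c) \<notin> invs ?x'" using swap_invs[OF dx xd(2)] xd by auto
    have "card (invs ?x') < card (invs x)" using si finite_invs[OF x'] by simp
    then obtain y where y: "y \<in> Sn n" "\<not> bdesc y" "(?x',y) \<in> \<Theta> n" "D (invs y) = D (invs ?x')" "D' (invs y) = D' (invs ?x')"
      using less.hyps[OF _ x'] by blast
    have "(x,y) \<in> \<Theta> n" using th y(3) eqv unfolding equiv_def trans_def by blast
    then show ?thesis using y Deq D'eq by auto
  qed
qed

theorem proposition9p8:
  fixes n :: nat
  shows "Hcong {[3,4,1,2], [2,4,1,3]} n = Hcong {[2,3,1]} n \<inter> Hcong {[3,1,2]} n"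
proof
  show "Hcong {[3,4,1,2], [2,4,1,3]} n \<subseteq> Hcong {[2,3,1]} n \<inter> Hcong {[3,1,2]} n"
  proof -
    have "Hcong {[3,4,1,2], [2,4,1,3]} n \<subseteq> Hcong {[2,3,1]} n"
      unfolding Hcong_def
    proof (rule Inter_greatest)
      fix R assume "R \<in> {\<Theta> n |\<Theta>. H_family \<Theta> \<and> (\<forall>\<gamma>\<in>{[2,3,1]}. contracts \<Theta> \<gamma>)}"
      then obtain \<Theta> where t: "R = \<Theta> n" "H_family \<Theta>" "contracts \<Theta> [2,3,1]" by auto
      then have "\<forall>\<gamma>\<in>{[3,4,1,2], [2,4,1,3]}. contracts \<Theta> \<gamma>" using contracts_231_imp[OF t(2,3)] by auto
      then have "R \<in> {\<Theta> n |\<Theta>. H_family \<Theta> \<and> (\<forall>\<gamma>\<in>{[3,4,1,2], [2,4,1,3]}. contracts \<Theta> \<gamma>)}" using t by blast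
      then show "\<Inter> {\<Theta> n |\<Theta>. H_family \<Theta> \<and> (\<forall>\<gamma>\<in>{[3,4,1,2], [2,4,1,3]}. contracts \<Theta> \<gamma>)} \<subseteq> R" by blast
    qed
    moreover have "Hcong {[3,4,1,2], [2,4,1,3]} n \<subseteq> Hcong {[3,1,2]} n"
      unfolding Hcong_def
    proof (rule Inter_greatest)
      fix R assume "R \<in> {\<Theta> n |\<Theta>. H_family \<Theta> \<and> (\<forall>\<gamma>\<in>{[3,1,2]}. contracts \<Theta> \<gamma>)}"
      then obtain \<Theta> where t: "R = \<Theta> n" "H_family \<Theta>" "contracts \<Theta> [3,1,2]" by auto
      then have "\<forall>\<gamma>\<in>{[3,4,1,2], [2,4,1,3]}. contracts \<Theta> \<gamma>" using contracts_312_imp[OF t(2,3)] by auto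
      then have "R \<in> {\<Theta> n |\<Theta>. H_family \<Theta> \<and> (\<forall>\<gamma>\<in>{[3,4,1,2], [2,4,1,3]}. contracts \<Theta> \<gamma>)}" using t by blast
      then show "\<Inter> {\<Theta> n |\<Theta>. H_family \<Theta> \<and> (\<forall>\<gamma>\<in>{[3,4,1,2], [2,4,1,3]}. contracts \<Theta> \<gamma>)} \<subseteq> R" by blast
    qed
    ultimately show ?thesis by blast
  qed
  show "Hcong {[2,3,1]} n \<inter> Hcong {[3,1,2]} n \<subseteq> Hcong {[3,4,1,2], [2,4,1,3]} n"
  proof
    fix p assume p: "p \<in> Hcong {[2,3,1]} n \<inter> Hcong {[3,1,2]} n"
    obtain x y where pxy: "p = (x,y)" by (cases p)
    have "Hcong {[2,3,1]} n \<subseteq> Syl n" unfolding Hcong_def using Syl_H Syl_contracts by blast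
    moreover have "Hcong {[3,1,2]} n \<subseteq> ASyl n" unfolding Hcong_def using ASyl_H ASyl_contracts by blast
    ultimately have xy: "x \<in> Sn n" "y \<in> Sn n" "D (invs x) = D (invs y)" "D' (invs x) = D' (invs y)"
      using p pxy unfolding Syl_def ASyl_def by auto
    show "p \<in> Hcong {[3,4,1,2], [2,4,1,3]} n"
      unfolding Hcong_def
    proof (rule InterI)
      fix R assume "R \<in> {\<Theta> n |\<Theta>. H_family \<Theta> \<and> (\<forall>\<gamma>\<in>{[3,4,1,2], [2,4,1,3]}. contracts \<Theta> \<gamma>)}"
      then obtain \<Theta> where t: "R = \<Theta> n" "H_family \<Theta>" "contracts \<Theta> [3,4,1,2]" "contracts \<Theta> [2,4,1,3]" by auto
      obtain x1 where x1: "x1 \<in> Sn n" "\<not> bdesc x1" "(x,x1) \<in> \<Theta> n" "D (invs x1) = D (invs x)" "D' (invs x1) = D' (invs x)"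
        using reduce[OF t(2,3,4) xy(1)] by blast
      obtain y1 where y1: "y1 \<in> Sn n" "\<not> bdesc y1" "(y,y1) \<in> \<Theta> n" "D (invs y1) = D (invs y)" "D' (invs y1) = D' (invs y)"
        using reduce[OF t(2,3,4) xy(2)] by blast
      have "invs x1 = invs y1" using reduced_invs[OF x1(1,2)] reduced_invs[OF y1(1,2)] x1(4,5) y1(4,5) xy(3,4) by simp
      then have "x1 = y1" using invs_inj[OF x1(1) y1(1)] by blast
      have eqv: "equiv (Sn n) (\<Theta> n)" using t(2) unfolding H_family_def lattice_congruence_def by blast
      have "(y1,y) \<in> \<Theta> n" using y1(3) eqv unfolding equiv_def sym_def by blast
      then have "(x,y) \<in> \<Theta> n" using x1(3) \<open>x1 = y1\<close> eqv unfolding equiv_def trans_def by blast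
      then show "p \<in> R" using pxy t(1) by simp
    qed
  qed
qed

end
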